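(* Let $p\ge 1$ and $n_1,\ldots,n_p$ be positive integers, $N=n_1\cdots n_p$, and $k$ a positive integer. Then: (a) $\Sigma^k_{pure}(n_1,\ldots,n_p)$ is a connected, compact subset of $\Sigma(n_1,\ldots,n_p)$. In particular, if $\Sigma^k_{pure}(n_1,\ldots,n_p)\neq\Sigma(n_1,\ldots,n_p)$, then it is not dense in $\Sigma(n_1,\ldots,n_p)$ and its complement in $\Sigma(n_1,\ldots,n_p)$ is (relatively) open. (b) If $k<\dfrac{n_1^2\cdots n_p^2}{1-2p+\sum_{j=1}^p 2n_j}$, then $\Sigma^k_{pure}(n_1,\ldots,n_p)$ has measure $0$ in $\Sigma(n_1,\ldots,n_p)$.
   Context: For a positive integer $w$, a density matrix on $\mathbb{C}^w$ is a $w\times w$ complex Hermitian positive semi-definite matrix of trace $1$; let $\mathcal{DM}(w)$ denote the set of these; a pure state is a density matrix of rank one (an orthogonal projection onto a line). Let $N=n_1\cdots n_p$ and identify $\mathbb{C}^N=\mathbb{C}^{n_1}\otimes\cdots\otimes\mathbb{C}^{n_p}$. A product density matrix is one of the form $A_1\otimes\cdots\otimes A_p$ with $A_i\in\mathcal{DM}(n_i)$; it is a pure product state if every $A_i$ is a pure state. $\Sigma(n_1,\ldots,n_p)\subset\mathcal{DM}(N)$ is the set of separable density matrices, i.e. convex combinations of (finitely many) product density matrices. $\Sigma^k_{pure}(n_1,\ldots,n_p)$ is the set of $A\in\Sigma(n_1,\ldots,n_p)$ that can be written as a convex combination of at most $k$ pure product states (i.e. whose optimal pure state ensemble length is $k$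 or fewer). Measure is $(N^2-1)$-dimensional Lebesgue measure on the real affine hyperplane $\tau_1(N)$ of $N\times N$ complex Hermitian matrices of trace $1$ (which contains $\Sigma(n_1,\ldots,n_p)$). *)

theory Defs
  imports "HOL-Analysis.Analysis"
begin

text \<open>Matrices are represented as functions nat => nat => complex; a w x w matrix
  is one whose entries vanish outside the index range {0..<w} x {0..<w}.
  The topology used is the product topology on such functions (on the set of
  matrices supported in {0..<w} x {0..<w} it coincides with the Euclidean one).\<close>

type_synonym cmat = "nat \<Rightarrow> nat \<Rightarrow> complex"

definition supported_in :: "nat \<Rightarrow> cmat \<Rightarrow> bool" where
  "supported_in w A \<longleftrightarrow> (\<forall>i j. (w \<le> i \<or> w \<le> j) \<longrightarrow> A i j = 0)"

definition density_matrix :: "nat \<Rightarrow> cmat \<Rightarrow> bool" where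
  "density_matrix w A \<longleftrightarrow>
     supported_in w A \<and>
     (\<forall>i<w. \<forall>j<w. A j i = cnj (A i j)) \<and>
     (\<forall>x :: nat \<Rightarrow> complex. 0 \<le> Re (\<Sum>i<w. \<Sum>j<w. cnj (x i) * A i j * x j)) \<and>
     (\<Sum>i<w. A i i) = 1"

definition pure_state :: "nat \<Rightarrow> cmat \<Rightarrow> bool" where
  "pure_state w A \<longleftrightarrow> density_matrix w A \<and>
     (\<exists>v :: nat \<Rightarrow> complex. (\<Sum>i<w. (cmod (v i))\<^sup>2) = 1 \<and>
        A = (\<lambda>i j. if i < w \<and> j < w then v i * cnj (v j) else 0))"

fun kron :: "nat list \<Rightarrow> cmat list \<Rightarrow> cmat" where
  "kron [] _ = (\<lambda>i j. if i = 0 \<and> j = 0 then 1 else 0)"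
| "kron (n # ns) [] = (\<lambda>i j. 0)"
| "kron (n # ns) (A # As) =
     (let m = prod_list ns; B = kron ns As in
      (\<lambda>i j. if i < n * m \<and> j < n * m
              then A (i div m) (j div m) * B (i mod m) (j mod m) else 0))"

definition product_dm :: "nat list \<Rightarrow> cmat \<Rightarrow> bool" where
  "product_dm ns A \<longleftrightarrow> (\<exists>As. length As = length ns \<and>
     (\<forall>i<length ns. density_matrix (ns ! i) (As ! i)) \<and> A = kron ns As)"

definition pure_product_state :: "nat list \<Rightarrow> cmat \<Rightarrow> bool" where
  "pure_product_state ns A \<longleftrightarrow> (\<exists>As. length As = length ns \<and>
     (\<forall>i<length ns. pure_state (ns ! i) (As ! i)) \<and> A = kron ns As)"

definition convex_comb_of :: "(cmat \<Rightarrow> bool) \<Rightarrow> nat \<Rightarrow> cmat \<Rightarrow> bool" where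
  "convex_comb_of P m A \<longleftrightarrow> (\<exists>(c :: nat \<Rightarrow> real) (B :: nat \<Rightarrow> cmat).
     (\<forall>l<m. 0 \<le> c l \<and> P (B l)) \<and> (\<Sum>l<m. c l) = 1 \<and>
     A = (\<lambda>i j. \<Sum>l<m. complex_of_real (c l) * B l i j))"

definition Sigma_sep :: "nat list \<Rightarrow> cmat set" where
  "Sigma_sep ns = {A. \<exists>m. convex_comb_of (product_dm ns) m A}"

definition Sigma_pure :: "nat \<Rightarrow> nat list \<Rightarrow> cmat set" where
  "Sigma_pure k ns = {A \<in> Sigma_sep ns. \<exists>m\<le>k. convex_comb_of (pure_product_state ns) m A}"

text \<open>Real affine coordinates on the trace-one hyperplane of N x N Hermitian
  matrices: the coordinate with index i < N*N - 1, (a,b) = (i div N, i mod N), is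
  Re M_aa if a = b, Re M_ab if a < b, Im M_ba if a > b.  The last diagonal entry
  (index N*N-1) is omitted, being determined by the trace condition.  This is an
  affine isomorphism of tau_1(N) onto R^(N^2-1).\<close>
definition hcoord :: "nat \<Rightarrow> cmat \<Rightarrow> (nat \<Rightarrow> real)" where
  "hcoord N M = restrict (\<lambda>i. let a = i div N; b = i mod N in
      if a = b then Re (M a a) else if a < b then Re (M a b) else Im (M b a)) {..<N * N - 1}"

end

theory Submission
  imports Defs
begin


definition l1 :: "'a set \<Rightarrow> ('a \<Rightarrow> real) \<Rightarrow> ('a \<Rightarrow> real) \<Rightarrow> real" where
  "l1 P x y = (\<Sum>j\<in>P. \<bar>x j - y j\<bar>)"

definition gridv :: "nat \<Rightarrow> real set" where
  "gridv K = (\<lambda>a. -1 + real a / real K) ` {..2*K}"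

lemma gridv_approx:
  assumes "K > 0" "t \<in> {-1..1}"
  shows "\<exists>c\<in>gridv K. \<bar>t - c\<bar> \<le> 1 / real K"
proof -
  define a where "a = nat (floor ((t+1) * real K))"
  have f0: "floor ((t+1) * real K) \<ge> 0" using assms by auto
  have f1: "(t+1) * real K \<le> 2 * real K" using assms by auto
  have "floor ((t+1) * real K) \<le> 2 * int K"
    using f1 by (metis floor_le_iff floor_of_nat less_eq_real_def of_int_of_nat_eq of_nat_mult of_nat_numeral floor_mono)
  then have a2: "a \<le> 2*K" unfolding a_def by linarith
  have ra: "real a = of_int (floor ((t+1) * real K))" unfolding a_def using f0 by simp
  have l: "real a \<le> (t+1) * real K" "(t+1) * real K < real a + 1"
    using ra by linarith+
  have "\<bar>t - (-1 + real a / real K)\<bar> \<le> 1 / real K"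
  proof -
    have "t - (-1 + real a / real K) = ((t+1) * real K - real a) / real K"
      using assms(1) by (simp add: field_simps)
    moreover have "0 \<le> ((t+1) * real K - real a) / real K" using l assms by simp
    moreover have "((t+1) * real K - real a) / real K \<le> 1 / real K"
      using l assms by (intro divide_right_mono) auto
    ultimately show ?thesis by simp
  qed
  moreover have "-1 + real a / real K \<in> gridv K" unfolding gridv_def using a2 by auto
  ultimately show ?thesis by blast
qed

lemma gridv_sub: "K > 0 \<Longrightarrow> gridv K \<subseteq> {-1..1}"
  unfolding gridv_def by (auto simp: field_simps)

lemma finite_gridv: "finite (gridv K)" unfolding gridv_def by auto
lemma card_gridv: "card (gridv K) \<le> 2*K+1"
  unfolding gridv_def by (rule order.trans[OF card_image_le]) auto

lemma real_pow_ineq: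
  fixes K :: real
  assumes "K \<ge> 1" "m < d" "G \<le> (2*K+1)^m" "0 \<le> G" "0 \<le> A"
  shows "G * (A / K)^d \<le> 3^m * A^d / K"
proof -
  have "G \<le> (3*K)^m"
    using assms(3) power_mono[of "2*K+1" "3*K" m] assms(1) by linarith
  then have "G * (A / K)^d \<le> (3*K)^m * (A^d / K^d)"
    using assms by (intro mult_mono) (auto simp: power_divide)
  also have "\<dots> = 3^m * A^d * (K^m / K^d)" by (simp add: power_mult_distrib)
  also have "K^m / K^d \<le> 1 / K"
  proof -
    have "K^d = K^m * K^(d-m)" using assms(2) by (simp add: power_add[symmetric])
    moreover have "K^(d-m) \<ge> K" using assms
      by (metis One_nat_def Suc_leI power_increasing power_one_right zero_less_diff)
    ultimately have "K^d \<ge> K^m * K" using assms by (simp add: mult_left_mono)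
    then show ?thesis using assms by (simp add: field_simps)
  qed
  then have "3^m * A^d * (K^m / K^d) \<le> 3^m * A^d * (1/K)"
    using assms by (intro mult_left_mono) auto
  finally show ?thesis by simp
qed

lemma lowdim_null:
  fixes P :: "'a set" and g :: "('a \<Rightarrow> real) \<Rightarrow> nat \<Rightarrow> real"
  assumes fin: "finite P" and dim: "card P < d" and L: "L \<ge> 0"
  and lip: "\<And>x y i. x \<in> PiE P (\<lambda>_. {-1..1}) \<Longrightarrow> y \<in> PiE P (\<lambda>_. {-1..1}) \<Longrightarrow> i < d
               \<Longrightarrow> \<bar>g x i - g y i\<bar> \<le> L * l1 P x y"
  and ext: "\<And>x. x \<in> PiE P (\<lambda>_. {-1..1}) \<Longrightarrow> g x \<in> PiE {..<d} (\<lambda>_. UNIV)"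
  shows "g ` PiE P (\<lambda>_. {-1..1}) \<in> null_sets (completion (PiM {..<d} (\<lambda>_. lborel)))"
proof -
  define Q where "Q = PiE P (\<lambda>_. {-1..1::real})"
  define M where "M = PiM {..<d} (\<lambda>_. lborel::real measure)"
  define m where "m = card P"
  define C where "C = 3^m * (2 * L * real m)^d"
  interpret product_sigma_finite "\<lambda>_. lborel::real measure" by standard
  have mainK: "\<exists>U \<in> sets M. g`Q \<subseteq> U \<and> emeasure M U \<le> ennreal (C / real K)" if K0: "K > 0" for K
  proof -
    define G where "G = PiE P (\<lambda>_. gridv K)"
    define r where "r = L * real m / real K"
    have r0: "r \<ge> 0" unfolding r_def using L by simp
    define box where "box c = PiE {..<d} (\<lambda>i. {g c i - r .. g c i + r})" for c
    define U where "U = (\<Union>c\<in>G. box c)"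
    have finG: "finite G" unfolding G_def using fin finite_gridv by (intro finite_PiE) auto
    have cardG: "real (card G) \<le> (2 * real K + 1)^m"
    proof -
      have "card G = (\<Prod>i\<in>P. card (gridv K))" unfolding G_def using fin by (simp add: card_PiE)
      also have "\<dots> = card (gridv K) ^ m" unfolding m_def by simp
      finally have "real (card G) = real (card (gridv K)) ^ m" by simp
      also have "\<dots> \<le> (2 * real K + 1)^m"
        using card_gridv[of K] by (intro power_mono) (auto simp flip: of_nat_le_iff)
      finally show ?thesis .
    qed
    have boxm: "box c \<in> sets M" for c
      unfolding box_def M_def by (intro sets_PiM_I_finite) auto
    have Um: "U \<in> sets M" unfolding U_def using finG boxm by auto
    have boxe: "emeasure M (box c) = ennreal ((2*r)^d)" for c
    proof -
      have "emeasure M (box c) = (\<Prod>i\<in>{..<d}. emeasure lborel {g c i - r .. g c i + r})"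
        unfolding M_def box_def by (intro emeasure_PiM) auto
      also have "\<dots> = (\<Prod>i\<in>{..<d}. ennreal (2*r))" using r0 by (intro prod.cong) auto
      also have "\<dots> = ennreal ((2*r)^d)" using r0 by (simp add: ennreal_power)
      finally show ?thesis .
    qed
    have cover: "g ` Q \<subseteq> U"
    proof
      fix z assume "z \<in> g ` Q"
      then obtain x where x: "x \<in> Q" "z = g x" by auto
      have "\<forall>j\<in>P. \<exists>c\<in>gridv K. \<bar>x j - c\<bar> \<le> 1 / real K"
        using x(1) K0 gridv_approx unfolding Q_def by (auto simp: PiE_iff)
      then obtain c' where c': "\<And>j. j \<in> P \<Longrightarrow> c' j \<in> gridv K \<and> \<bar>x j - c' j\<bar> \<le> 1 / real K"
        by metis
      define c where "c = restrict c' P"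
      have cG: "c \<in> G" unfolding G_def c_def using c' by auto
      have cQ: "c \<in> Q" unfolding Q_def c_def using c' gridv_sub[OF K0] by auto
      have "l1 P x c \<le> (\<Sum>j\<in>P. 1 / real K)"
        unfolding l1_def c_def using c' by (intro sum_mono) auto
      also have "\<dots> = real m / real K" unfolding m_def by simp
      finally have l1b: "l1 P x c \<le> real m / real K" .
      have "g x \<in> box c" unfolding box_def
      proof (rule PiE_I)
        fix i assume i: "i \<in> {..<d}"
        have "\<bar>g x i - g c i\<bar> \<le> L * l1 P x c" using lip[of x c i] x(1) cQ i unfolding Q_def by auto
        also have "\<dots> \<le> L * (real m / real K)" using l1b L by (intro mult_left_mono) auto
        finally show "g x i \<in> {g c i - r..g c i + r}" unfolding r_def by auto
      next
        fix i assume "i \<notin> {..<d}" then show "g x i = undefined" using ext[of x] x(1) unfolding Q_def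
          by (auto simp: PiE_iff extensional_def)
      qed
      then show "z \<in> U" unfolding U_def using cG x by auto
    qed
    have "emeasure M U \<le> (\<Sum>c\<in>G. emeasure M (box c))"
      unfolding U_def using finG boxm by (intro emeasure_subadditive_finite) auto
    also have "\<dots> = ennreal (real (card G) * (2*r)^d)" using r0 by (simp add: boxe ennreal_of_nat_eq_real_of_nat ennreal_mult)
    also have "\<dots> \<le> ennreal (C / real K)"
    proof (rule ennreal_leI)
      have "(2*r) = (2 * L * real m) / real K" unfolding r_def by simp
      then have "real (card G) * (2*r)^d = real (card G) * ((2 * L * real m) / real K)^d" by simp
      also have "\<dots> \<le> 3^m * (2 * L * real m)^d / real K"
        using K0 dim cardG L unfolding m_def by (intro real_pow_ineq) auto
      finally show "real (card G) * (2*r)^d \<le> C / real K" unfolding C_def by simp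
    qed
    finally show ?thesis using Um cover by blast
  qed
  then obtain U where U: "\<And>K. K > 0 \<Longrightarrow> U K \<in> sets M \<and> g`Q \<subseteq> U K \<and> emeasure M (U K) \<le> ennreal (C / real K)"
    by metis
  define NN where "NN = (\<Inter>K. U (Suc K))"
  have NNm: "NN \<in> sets M" unfolding NN_def using U by auto
  have sub: "g`Q \<subseteq> NN" unfolding NN_def using U by auto
  have le: "emeasure M NN \<le> ennreal (C / real (Suc K))" for K
  proof -
    have "emeasure M NN \<le> emeasure M (U (Suc K))"
      using U[of "Suc K"] NNm unfolding NN_def by (intro emeasure_mono) auto
    then show ?thesis using U[of "Suc K"] by auto
  qed
  have lim: "(\<lambda>K. ennreal (C / real (Suc K))) \<longlonglongrightarrow> ennreal 0"
  proof (rule tendsto_ennrealI)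
    have "(\<lambda>K. C * inverse (real (Suc K))) \<longlonglongrightarrow> C * 0"
      by (intro tendsto_mult tendsto_const LIMSEQ_inverse_real_of_nat)
    then show "(\<lambda>K. C / real (Suc K)) \<longlonglongrightarrow> 0" by (simp add: field_simps)
  qed
  have "emeasure M NN \<le> 0"
    using LIMSEQ_le_const[OF lim, of "emeasure M NN"] le by auto
  then have "NN \<in> null_sets M" using NNm by auto
  then show ?thesis unfolding Q_def[symmetric] M_def[symmetric] null_sets_completion_iff2
    using sub by blast
qed




definition lipb :: "'a set \<Rightarrow> (('a \<Rightarrow> real) \<Rightarrow> complex) \<Rightarrow> bool" where
  "lipb P f \<longleftrightarrow> (\<exists>B L. \<forall>x\<in>PiE P (\<lambda>_. {-1..1}). cmod (f x) \<le> B \<and>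
      (\<forall>y\<in>PiE P (\<lambda>_. {-1..1}). cmod (f x - f y) \<le> L * l1 P x y))"

lemma l1_nonneg: "l1 P x y \<ge> 0" unfolding l1_def by (intro sum_nonneg) auto

lemma lipbI:
  assumes "\<And>x. x\<in>PiE P (\<lambda>_. {-1..1}) \<Longrightarrow> cmod (f x) \<le> B"
      "\<And>x y. x\<in>PiE P (\<lambda>_. {-1..1}) \<Longrightarrow> y\<in>PiE P (\<lambda>_. {-1..1}) \<Longrightarrow> cmod (f x - f y) \<le> L * l1 P x y"
  shows "lipb P f"
  unfolding lipb_def using assms by blast

lemma lipbE:
  assumes "lipb P f"
  obtains B L where "L \<ge> 0" "B \<ge> 0" "\<And>x. x\<in>PiE P (\<lambda>_. {-1..1}) \<Longrightarrow> cmod (f x) \<le> B"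
      "\<And>x y. x\<in>PiE P (\<lambda>_. {-1..1}) \<Longrightarrow> y\<in>PiE P (\<lambda>_. {-1..1}) \<Longrightarrow> cmod (f x - f y) \<le> L * l1 P x y"
proof -
  obtain B L where BL: "\<forall>x\<in>PiE P (\<lambda>_. {-1..1}). cmod (f x) \<le> B \<and>
      (\<forall>y\<in>PiE P (\<lambda>_. {-1..1}). cmod (f x - f y) \<le> L * l1 P x y)"
    using assms unfolding lipb_def by blast
  show ?thesis
  proof (rule that[of "max L 0" "max B 0"])
    fix x y assume xy: "x\<in>PiE P (\<lambda>_. {-1..1::real})" "y\<in>PiE P (\<lambda>_. {-1..1::real})"
    have "cmod (f x - f y) \<le> L * l1 P x y" using BL xy by blast
    also have "\<dots> \<le> max L 0 * l1 P x y" using l1_nonneg[of P x y] by (intro mult_right_mono) auto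
    finally show "cmod (f x - f y) \<le> max L 0 * l1 P x y" .
  qed (use BL in auto)
qed

lemma lipb_const: "lipb P (\<lambda>x. c)"
  by (rule lipbI[of _ _ "cmod c" 0]) auto

lemma lipb_coord:
  assumes "j \<in> P" and fin: "finite P"
  shows "lipb P (\<lambda>x. complex_of_real (x j))"
proof (rule lipbI[of _ _ 1 1])
  fix x assume "x\<in>PiE P (\<lambda>_. {-1..1::real})"
  then show "cmod (complex_of_real (x j)) \<le> 1" using assms by (auto simp: PiE_iff)
next
  fix x y :: "'a \<Rightarrow> real"
  have "cmod (complex_of_real (x j) - complex_of_real (y j)) = \<bar>x j - y j\<bar>"
    by (metis norm_of_real of_real_diff)
  also have "\<dots> \<le> l1 P x y" unfolding l1_def using assms
    by (intro member_le_sum) auto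
  finally show "cmod (complex_of_real (x j) - complex_of_real (y j)) \<le> 1 * l1 P x y" by simp
qed

lemma lipb_add:
  assumes "lipb P f" "lipb P g" shows "lipb P (\<lambda>x. f x + g x)"
proof -
  obtain B1 L1 where 1: "\<And>x. x\<in>PiE P (\<lambda>_. {-1..1}) \<Longrightarrow> cmod (f x) \<le> B1"
      "\<And>x y. x\<in>PiE P (\<lambda>_. {-1..1}) \<Longrightarrow> y\<in>PiE P (\<lambda>_. {-1..1}) \<Longrightarrow> cmod (f x - f y) \<le> L1 * l1 P x y"
    using lipbE[OF assms(1)] by metis
  obtain B2 L2 where 2: "\<And>x. x\<in>PiE P (\<lambda>_. {-1..1}) \<Longrightarrow> cmod (g x) \<le> B2"
      "\<And>x y. x\<in>PiE P (\<lambda>_. {-1..1}) \<Longrightarrow> y\<in>PiE P (\<lambda>_. {-1..1}) \<Longrightarrow> cmod (g x - g y) \<le> L2 * l1 P x y"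
    using lipbE[OF assms(2)] by metis
  show ?thesis
  proof (rule lipbI[of _ _ "B1+B2" "L1+L2"])
    fix x assume x: "x\<in>PiE P (\<lambda>_. {-1..1::real})"
    show "cmod (f x + g x) \<le> B1 + B2" using 1(1)[OF x] 2(1)[OF x] norm_triangle_ineq[of "f x" "g x"] by linarith
  next
    fix x y assume x: "x\<in>PiE P (\<lambda>_. {-1..1::real})" and y: "y\<in>PiE P (\<lambda>_. {-1..1::real})"
    have "cmod (f x + g x - (f y + g y)) \<le> cmod (f x - f y) + cmod (g x - g y)"
      by (metis add_diff_add norm_triangle_ineq)
    then show "cmod (f x + g x - (f y + g y)) \<le> (L1 + L2) * l1 P x y"
      using 1(2)[OF x y] 2(2)[OF x y] by (simp add: distrib_right)
  qed
qed

lemma lipb_mult: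
  assumes "lipb P f" "lipb P g" shows "lipb P (\<lambda>x. f x * g x)"
proof -
  obtain B1 L1 where 1: "B1 \<ge> 0" "L1 \<ge> 0" "\<And>x. x\<in>PiE P (\<lambda>_. {-1..1}) \<Longrightarrow> cmod (f x) \<le> B1"
      "\<And>x y. x\<in>PiE P (\<lambda>_. {-1..1}) \<Longrightarrow> y\<in>PiE P (\<lambda>_. {-1..1}) \<Longrightarrow> cmod (f x - f y) \<le> L1 * l1 P x y"
    using lipbE[OF assms(1)] by metis
  obtain B2 L2 where 2: "B2 \<ge> 0" "L2 \<ge> 0" "\<And>x. x\<in>PiE P (\<lambda>_. {-1..1}) \<Longrightarrow> cmod (g x) \<le> B2"
      "\<And>x y. x\<in>PiE P (\<lambda>_. {-1..1}) \<Longrightarrow> y\<in>PiE P (\<lambda>_. {-1..1}) \<Longrightarrow> cmod (g x - g y) \<le> L2 * l1 P x y"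
    using lipbE[OF assms(2)] by metis
  show ?thesis
  proof (rule lipbI[of _ _ "B1*B2" "B1*L2 + B2*L1"])
    fix x assume x: "x\<in>PiE P (\<lambda>_. {-1..1::real})"
    show "cmod (f x * g x) \<le> B1 * B2" unfolding norm_mult
      using 1 2 x by (intro mult_mono) auto
  next
    fix x y assume x: "x\<in>PiE P (\<lambda>_. {-1..1::real})" and y: "y\<in>PiE P (\<lambda>_. {-1..1::real})"
    have "f x * g x - f y * g y = f x * (g x - g y) + g y * (f x - f y)" by (simp add: algebra_simps)
    then have "cmod (f x * g x - f y * g y) \<le> cmod (f x) * cmod (g x - g y) + cmod (g y) * cmod (f x - f y)"
      by (metis norm_mult norm_triangle_ineq)
    also have "\<dots> \<le> B1 * (L2 * l1 P x y) + B2 * (L1 * l1 P x y)"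
      using 1 2 x y by (intro add_mono mult_mono) auto
    finally show "cmod (f x * g x - f y * g y) \<le> (B1 * L2 + B2 * L1) * l1 P x y"
      by (simp add: algebra_simps)
  qed
qed

lemma lipb_neg: assumes "lipb P f" shows "lipb P (\<lambda>x. - f x)"
proof -
  have "lipb P (\<lambda>x. (-1) * f x)" by (rule lipb_mult[OF lipb_const assms])
  then show ?thesis by simp
qed

lemma lipb_diff: assumes "lipb P f" "lipb P g" shows "lipb P (\<lambda>x. f x - g x)"
proof -
  have "lipb P (\<lambda>x. f x + - g x)" by (rule lipb_add[OF assms(1) lipb_neg[OF assms(2)]])
  then show ?thesis by simp
qed

lemma lipb_cnj:
  assumes "lipb P f" shows "lipb P (\<lambda>x. cnj (f x))"
proof -
  obtain B1 L1 where 1: "\<And>x. x\<in>PiE P (\<lambda>_. {-1..1}) \<Longrightarrow> cmod (f x) \<le> B1"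
      "\<And>x y. x\<in>PiE P (\<lambda>_. {-1..1}) \<Longrightarrow> y\<in>PiE P (\<lambda>_. {-1..1}) \<Longrightarrow> cmod (f x - f y) \<le> L1 * l1 P x y"
    using lipbE[OF assms(1)] by metis
  show ?thesis
  proof (rule lipbI[of _ _ B1 L1])
    fix x assume x: "x\<in>PiE P (\<lambda>_. {-1..1::real})"
    show "cmod (cnj (f x)) \<le> B1" using 1(1)[OF x] by simp
  next
    fix x y assume x: "x\<in>PiE P (\<lambda>_. {-1..1::real})" and y: "y\<in>PiE P (\<lambda>_. {-1..1::real})"
    have "cnj (f x) - cnj (f y) = cnj (f x - f y)" by simp
    then show "cmod (cnj (f x) - cnj (f y)) \<le> L1 * l1 P x y" using 1(2)[OF x y] by (simp only: complex_mod_cnj)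
  qed
qed

lemma lipb_sum:
  assumes "finite I" "\<And>i. i \<in> I \<Longrightarrow> lipb P (f i)" shows "lipb P (\<lambda>x. \<Sum>i\<in>I. f i x)"
  using assms by (induction I rule: finite_induct) (simp_all add: lipb_add lipb_const)

lemma lipb_inverse:
  assumes "lipb P f" "\<And>x. x\<in>PiE P (\<lambda>_. {-1..1}) \<Longrightarrow> cmod (f x) \<ge> 1"
  shows "lipb P (\<lambda>x. inverse (f x))"
proof -
  obtain B1 L1 where 1: "\<And>x. x\<in>PiE P (\<lambda>_. {-1..1}) \<Longrightarrow> cmod (f x) \<le> B1"
      "\<And>x y. x\<in>PiE P (\<lambda>_. {-1..1}) \<Longrightarrow> y\<in>PiE P (\<lambda>_. {-1..1}) \<Longrightarrow> cmod (f x - f y) \<le> L1 * l1 P x y"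
    using lipbE[OF assms(1)] by metis
  show ?thesis
  proof (rule lipbI[of _ _ 1 L1])
    fix x assume x: "x\<in>PiE P (\<lambda>_. {-1..1::real})"
    show "cmod (inverse (f x)) \<le> 1" using assms(2)[OF x] by (simp add: norm_inverse inverse_le_1_iff)
  next
    fix x y assume x: "x\<in>PiE P (\<lambda>_. {-1..1::real})" and y: "y\<in>PiE P (\<lambda>_. {-1..1::real})"
    have nz: "f x \<noteq> 0" "f y \<noteq> 0" using assms(2)[OF x] assms(2)[OF y] by auto
    have "inverse (f x) - inverse (f y) = (f y - f x) / (f x * f y)" using nz
      by (simp add: field_simps)
    then have "cmod (inverse (f x) - inverse (f y)) = cmod (f x - f y) / (cmod (f x) * cmod (f y))"
      by (simp add: norm_divide norm_mult norm_minus_commute)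
    also have "\<dots> \<le> cmod (f x - f y)"
    proof -
      have "1 \<le> cmod (f x) * cmod (f y)" using assms(2)[OF x] assms(2)[OF y]
        by (metis mult_mono' mult_1 zero_le_one)
      then show ?thesis by (simp add: divide_le_eq mult_le_cancel_left1 order_trans[OF _ mult_right_mono])
    qed
    finally show "cmod (inverse (f x) - inverse (f y)) \<le> L1 * l1 P x y" using 1(2)[OF x y] by linarith
  qed
qed

lemma lipb_divide:
  assumes "lipb P f" "lipb P g" "\<And>x. x\<in>PiE P (\<lambda>_. {-1..1}) \<Longrightarrow> cmod (g x) \<ge> 1"
  shows "lipb P (\<lambda>x. f x / g x)"
  using lipb_mult[OF assms(1) lipb_inverse[OF assms(2,3)]] by (simp add: divide_inverse)

lemma lipb_if: "lipb P f \<Longrightarrow> lipb P g \<Longrightarrow> lipb P (\<lambda>x. if c then f x else g x)"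
  by (cases c) auto

lemma lipb_uniform:
  assumes "finite I" "\<And>i. i \<in> I \<Longrightarrow> lipb P (f i)"
  shows "\<exists>L\<ge>0. \<forall>i\<in>I. \<forall>x\<in>PiE P (\<lambda>_. {-1..1}). \<forall>y\<in>PiE P (\<lambda>_. {-1..1}). cmod (f i x - f i y) \<le> L * l1 P x y"
  using assms
proof (induction I rule: finite_induct)
  case empty then show ?case by (intro exI[of _ 0]) simp
next
  case (insert a I)
  have "\<And>i. i \<in> I \<Longrightarrow> lipb P (f i)" using insert.prems by simp
  then obtain L where L: "L\<ge>0" "\<forall>i\<in>I. \<forall>x\<in>PiE P (\<lambda>_. {-1..1}). \<forall>y\<in>PiE P (\<lambda>_. {-1..1}). cmod (f i x - f i y) \<le> L * l1 P x y"
    using insert.IH by blast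
  have "lipb P (f a)" using insert.prems by simp
  then obtain B1 L1 where 1: "L1 \<ge> 0"
      "\<And>x y. x\<in>PiE P (\<lambda>_. {-1..1}) \<Longrightarrow> y\<in>PiE P (\<lambda>_. {-1..1}) \<Longrightarrow> cmod (f a x - f a y) \<le> L1 * l1 P x y"
    by (rule lipbE) blast
  show ?case
  proof (intro exI[of _ "L + L1"] conjI ballI)
    show "0 \<le> L + L1" using L 1 by simp
    fix i x y assume i: "i \<in> insert a I" and x: "x\<in>PiE P (\<lambda>_. {-1..1::real})" and y: "y\<in>PiE P (\<lambda>_. {-1..1::real})"
    have le: "L * l1 P x y \<le> (L + L1) * l1 P x y" "L1 * l1 P x y \<le> (L + L1) * l1 P x y"
      using L(1) 1(1) l1_nonneg[of P x y] by (simp_all add: mult_right_mono)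
    show "cmod (f i x - f i y) \<le> (L + L1) * l1 P x y"
    proof (cases "i = a")
      case True
      then show ?thesis using 1(2)[OF x y] le(2) by simp
    next
      case False
      then have "i \<in> I" using i by simp
      then have "cmod (f i x - f i y) \<le> L * l1 P x y" using L(2) x y by blast
      then show ?thesis using le(1) by linarith
    qed
  qed
qed

lemma lipb_kron:
  assumes "\<And>x. length (As x) = length ns"
    and "\<And>l a b. l < length ns \<Longrightarrow> lipb P (\<lambda>x. (As x ! l) a b)"
  shows "lipb P (\<lambda>x. kron ns (As x) a b)"
  using assms
proof (induction ns arbitrary: As a b)
  case Nil
  then show ?case by (simp add: lipb_const)
next
  case (Cons n ns)
  have eq: "As x = hd (As x) # tl (As x)" for x using Cons.prems(1)[of x] by (cases "As x") auto
  have IH: "lipb P (\<lambda>x. kron ns (tl (As x)) a' b')" for a' b'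
    using Cons.prems by (intro Cons.IH) (auto simp: nth_tl)
  have H: "lipb P (\<lambda>x. hd (As x) a' b')" for a' b'
  proof -
    have "hd (As x) = As x ! 0" for x proof -
      have "As x \<noteq> []" using Cons.prems(1)[of x] by auto
      then show ?thesis by (rule hd_conv_nth)
    qed
    then show ?thesis using Cons.prems(2)[of 0 a' b'] by simp
  qed
  have K: "kron (n#ns) (As x) a b = (if a < n * prod_list ns \<and> b < n * prod_list ns then
      hd (As x) (a div prod_list ns) (b div prod_list ns) * kron ns (tl (As x)) (a mod prod_list ns) (b mod prod_list ns) else 0)" for x
    by (subst eq) (simp only: kron.simps Let_def)
  show ?case
  proof (cases "a < n * prod_list ns \<and> b < n * prod_list ns")
    case True
    show ?thesis unfolding K if_P[OF True] by (rule lipb_mult[OF H IH])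
  next
    case False
    show ?thesis unfolding K if_not_P[OF False] by (rule lipb_const)
  qed
qed




type_synonym lbl = "nat + nat \<times> nat \<times> nat \<times> bool"

definition lbls :: "nat \<Rightarrow> nat list \<Rightarrow> lbl set" where
  "lbls k ns = Inl ` {..<k-1} \<union> Inr ` (SIGMA l:{..<k}. SIGMA j:{..<length ns}. {..<ns!j - 1} \<times> UNIV)"

definition ridx :: "nat \<Rightarrow> nat \<Rightarrow> nat" where "ridx i r = (if r < i then r else r - 1)"

definition zc :: "(nat \<Rightarrow> nat \<Rightarrow> nat) \<Rightarrow> (lbl \<Rightarrow> real) \<Rightarrow> nat \<Rightarrow> nat \<Rightarrow> nat \<Rightarrow> complex" where
  "zc ch x l j r = (if r = ch l j then 1 else
     Complex (x (Inr (l, j, ridx (ch l j) r, True))) (x (Inr (l, j, ridx (ch l j) r, False))))"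

definition rhoc :: "nat \<Rightarrow> (nat \<Rightarrow> complex) \<Rightarrow> cmat" where
  "rhoc n w = (\<lambda>a b. if a < n \<and> b < n then w a * cnj (w b) / (\<Sum>r<n. w r * cnj (w r)) else 0)"

definition rho0 :: "nat \<Rightarrow> (nat \<Rightarrow> complex) \<Rightarrow> cmat" where
  "rho0 n v = (\<lambda>a b. if a < n \<and> b < n then v a * cnj (v b) else 0)"

definition coef :: "nat \<Rightarrow> (lbl \<Rightarrow> real) \<Rightarrow> nat \<Rightarrow> real" where
  "coef k x l = (if l < k - 1 then x (Inl l) else 1 - (\<Sum>l'<k-1. x (Inl l')))"

definition Fm :: "nat \<Rightarrow> nat list \<Rightarrow> (nat \<Rightarrow> nat \<Rightarrow> nat) \<Rightarrow> (lbl \<Rightarrow> real) \<Rightarrow> cmat" where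
  "Fm k ns ch x = (\<lambda>a b. \<Sum>l<k. complex_of_real (coef k x l) *
      kron ns (map (\<lambda>j. rhoc (ns!j) (zc ch x l j)) [0..<length ns]) a b)"

lemma finite_lbls: "finite (lbls k ns)"
  unfolding lbls_def by (intro finite_UnI finite_imageI finite_SigmaI) auto

lemma card_lbls: "card (lbls k ns) = (k - 1) + k * (\<Sum>j<length ns. (ns!j - 1) * 2)"
proof -
  have d: "Inl ` {..<k-1} \<inter> Inr ` (SIGMA l:{..<k}. SIGMA j:{..<length ns}. {..<ns!j - 1} \<times> (UNIV::bool set)) = {}"
    by auto
  have "card (SIGMA l:{..<k}. SIGMA j:{..<length ns}. {..<ns!j - 1} \<times> (UNIV::bool set))
      = (\<Sum>l<k. card (SIGMA j:{..<length ns}. {..<ns!j - 1} \<times> (UNIV::bool set)))"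
    by (rule card_SigmaI) auto
  also have "\<dots> = k * card (SIGMA j:{..<length ns}. {..<ns!j - 1} \<times> (UNIV::bool set))" by simp
  also have "card (SIGMA j:{..<length ns}. {..<ns!j - 1} \<times> (UNIV::bool set)) = (\<Sum>j<length ns. card ({..<ns!j - 1} \<times> (UNIV::bool set)))"
    by (rule card_SigmaI) auto
  also have "\<dots> = (\<Sum>j<length ns. (ns!j - 1) * 2)" by (simp add: card_cartesian_product)
  finally have c2: "card (SIGMA l:{..<k}. SIGMA j:{..<length ns}. {..<ns!j - 1} \<times> (UNIV::bool set)) = k * (\<Sum>j<length ns. (ns!j - 1) * 2)" .
  show ?thesis unfolding lbls_def
    by (subst card_Un_disjoint) (auto simp: card_image c2 intro!: finite_SigmaI)
qed

lemma lipb_cof: "lipb P (\<lambda>x. complex_of_real (x j)) \<Longrightarrow> True" by simp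

lemma lipb_coef:
  shows "lipb (lbls k ns) (\<lambda>x. complex_of_real (coef k x l))"
proof (cases "l < k - 1")
  case True
  have "Inl l \<in> lbls k ns" using True unfolding lbls_def by auto
  then show ?thesis unfolding coef_def using True by (simp add: lipb_coord finite_lbls)
next
  case False
  have "lipb (lbls k ns) (\<lambda>x. 1 - (\<Sum>l'<k-1. complex_of_real (x (Inl l'))))"
  proof (intro lipb_diff lipb_const lipb_sum)
    fix l' assume "l' \<in> {..<k-1}"
    then have "Inl l' \<in> lbls k ns" unfolding lbls_def by auto
    then show "lipb (lbls k ns) (\<lambda>x. complex_of_real (x (Inl l')))" by (simp add: lipb_coord finite_lbls)
  qed auto
  then show ?thesis unfolding coef_def using False by simp
qed

lemma lipb_zc:
  assumes "l < k" "j < length ns" "r < ns!j" "ch l j < ns!j"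
  shows "lipb (lbls k ns) (\<lambda>x. zc ch x l j r)"
proof (cases "r = ch l j")
  case True then show ?thesis unfolding zc_def by (simp add: lipb_const)
next
  case False
  have ri: "ridx (ch l j) r < ns!j - 1" unfolding ridx_def using assms False by auto
  have m: "Inr (l, j, ridx (ch l j) r, s) \<in> lbls k ns" for s
    unfolding lbls_def using assms ri by auto
  have eq: "Complex a b = complex_of_real a + \<i> * complex_of_real b" for a b by (simp add: complex_eq_iff)
  have "lipb (lbls k ns) (\<lambda>x. complex_of_real (x (Inr (l, j, ridx (ch l j) r, True))) +
      \<i> * complex_of_real (x (Inr (l, j, ridx (ch l j) r, False))))"
    by (intro lipb_add lipb_mult lipb_const lipb_coord m finite_lbls)
  then show ?thesis unfolding zc_def eq using False by simp
qed

lemma sum_cnj_real: fixes w :: "nat \<Rightarrow> complex" shows "(\<Sum>r<n. w r * cnj (w r)) = complex_of_real (\<Sum>r<n. (cmod (w r))\<^sup>2)"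
  by (simp only: of_real_sum complex_norm_square)

lemma sum_cnj_ge1:
  fixes w :: "nat \<Rightarrow> complex"
  assumes "i < n" "w i = 1"
  shows "cmod (\<Sum>r<n. w r * cnj (w r)) \<ge> 1"
proof -
  have "(\<Sum>r<n. (cmod (w r))\<^sup>2) \<ge> (cmod (w i))\<^sup>2"
    using member_le_sum[of i "{..<n}" "\<lambda>r. (cmod (w r))\<^sup>2"] assms by simp
  then have "(\<Sum>r<n. (cmod (w r))\<^sup>2) \<ge> 1" using assms by simp
  moreover have "cmod (complex_of_real (\<Sum>r<n. (cmod (w r))\<^sup>2)) = (\<Sum>r<n. (cmod (w r))\<^sup>2)"
  proof -
    have "0 \<le> (\<Sum>r<n. (cmod (w r))\<^sup>2)" by (intro sum_nonneg) auto
    then show ?thesis by (simp only: norm_of_real abs_of_nonneg)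
  qed
  ultimately show ?thesis unfolding sum_cnj_real by linarith
qed

lemma lipb_rhoc:
  assumes "l < k" "j < length ns" "ch l j < ns!j"
  shows "lipb (lbls k ns) (\<lambda>x. rhoc (ns!j) (zc ch x l j) a b)"
proof (cases "a < ns!j \<and> b < ns!j")
  case True
  have "lipb (lbls k ns) (\<lambda>x. zc ch x l j a * cnj (zc ch x l j b) / (\<Sum>r<ns!j. zc ch x l j r * cnj (zc ch x l j r)))"
  proof (rule lipb_divide)
    show "lipb (lbls k ns) (\<lambda>x. zc ch x l j a * cnj (zc ch x l j b))"
      using True assms by (intro lipb_mult lipb_cnj lipb_zc) auto
    show "lipb (lbls k ns) (\<lambda>x. \<Sum>r<ns!j. zc ch x l j r * cnj (zc ch x l j r))"
      using assms by (intro lipb_sum lipb_mult lipb_cnj lipb_zc) auto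
    show "1 \<le> cmod (\<Sum>r<ns!j. zc ch x l j r * cnj (zc ch x l j r))" for x
      using assms by (intro sum_cnj_ge1[of "ch l j"]) (auto simp: zc_def)
  qed
  then show ?thesis unfolding rhoc_def using True by simp
next
  case False
  have c: "(a < ns!j \<and> b < ns!j) = False" using False by simp
  have "rhoc (ns!j) w a b = 0" for w by (simp only: rhoc_def c if_False)
  then show ?thesis by (simp only: lipb_const)
qed

lemma lipb_Fm:
  assumes "\<And>l j. l < k \<Longrightarrow> j < length ns \<Longrightarrow> ch l j < ns!j"
  shows "lipb (lbls k ns) (\<lambda>x. Fm k ns ch x a b)"
  unfolding Fm_def
proof (intro lipb_sum lipb_mult lipb_coef lipb_kron)
  fix l l' a' b' assume l: "l \<in> {..<k}" and l': "l' < length ns"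
  show "lipb (lbls k ns) (\<lambda>x. (map (\<lambda>j. rhoc (ns ! j) (zc ch x l j)) [0..<length ns] ! l') a' b')"
    using l l' assms by (simp add: lipb_rhoc)
qed auto




definition Charts :: "nat \<Rightarrow> nat list \<Rightarrow> (nat \<Rightarrow> nat \<Rightarrow> nat) set" where
  "Charts k ns = PiE {..<k} (\<lambda>l. PiE {..<length ns} (\<lambda>j. {..<ns!j}))"

lemma finite_Charts: "finite (Charts k ns)"
  unfolding Charts_def by (intro finite_PiE) auto

lemma rhoc_cong: assumes "\<And>r. r < n \<Longrightarrow> w r = w' r" shows "rhoc n w = rhoc n w'"
proof -
  have "(\<Sum>r<n. w r * cnj (w r)) = (\<Sum>r<n. w' r * cnj (w' r))" using assms by (intro sum.cong) auto
  then show ?thesis unfolding rhoc_def using assms by (intro ext) auto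
qed

lemma rhoc_scale:
  fixes w :: "nat \<Rightarrow> complex"
  assumes "t \<noteq> 0" shows "rhoc n (\<lambda>r. w r * t) = rhoc n w"
proof (intro ext)
  fix a b
  have tt: "t * cnj t \<noteq> 0" using assms by simp
  have s: "(\<Sum>r<n. w r * t * cnj (w r * t)) = (t * cnj t) * (\<Sum>r<n. w r * cnj (w r))"
    by (simp add: sum_distrib_left algebra_simps)
  have "w a * t * cnj (w b * t) / (\<Sum>r<n. w r * t * cnj (w r * t)) = (t * cnj t) * (w a * cnj (w b)) / ((t * cnj t) * (\<Sum>r<n. w r * cnj (w r)))"
    unfolding s by (simp add: algebra_simps)
  also have "\<dots> = w a * cnj (w b) / (\<Sum>r<n. w r * cnj (w r))"
    using tt by (rule mult_divide_mult_cancel_left)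
  finally show "rhoc n (\<lambda>r. w r * t) a b = rhoc n w a b" unfolding rhoc_def by simp
qed

lemma rhoc_unit:
  fixes v :: "nat \<Rightarrow> complex"
  assumes "(\<Sum>r<n. (cmod (v r))\<^sup>2) = 1" shows "rhoc n v = rho0 n v"
proof -
  have "(\<Sum>r<n. v r * cnj (v r)) = 1" by (simp only: sum_cnj_real assms of_real_1)
  then show ?thesis unfolding rhoc_def rho0_def by (simp only: div_by_1)
qed

lemma pps_rep:
  assumes "pure_product_state ns B"
  shows "\<exists>V. (\<forall>j<length ns. (\<Sum>r<ns!j. (cmod (V j r))\<^sup>2) = 1) \<and>
             B = kron ns (map (\<lambda>j. rho0 (ns!j) (V j)) [0..<length ns])"
proof -
  obtain As where As: "length As = length ns" "\<forall>i<length ns. pure_state (ns ! i) (As ! i)" "B = kron ns As"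
    using assms unfolding pure_product_state_def by blast
  have "\<forall>j. \<exists>v. j < length ns \<longrightarrow> (\<Sum>r<ns!j. (cmod (v r))\<^sup>2) = 1 \<and> As ! j = rho0 (ns!j) v"
    using As(2) unfolding pure_state_def rho0_def by blast
  then obtain V where V: "\<And>j. j < length ns \<Longrightarrow> (\<Sum>r<ns!j. (cmod (V j r))\<^sup>2) = 1 \<and> As ! j = rho0 (ns!j) (V j)"
    by metis
  have "As = map (\<lambda>j. rho0 (ns!j) (V j)) [0..<length ns]"
    by (rule nth_equalityI) (use As(1) V in auto)
  then show ?thesis using V As(3) by blast
qed

lemma chart_exists:
  fixes v :: "nat \<Rightarrow> complex"
  assumes "n > 0" "(\<Sum>r<n. (cmod (v r))\<^sup>2) = 1"
  shows "\<exists>i<n. v i \<noteq> 0 \<and> (\<forall>r<n. cmod (v r) \<le> cmod (v i))"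
proof -
  define M where "M = Max ((\<lambda>r. cmod (v r)) ` {..<n})"
  have "M \<in> (\<lambda>r. cmod (v r)) ` {..<n}" unfolding M_def using assms(1) by (intro Max_in) auto
  then obtain i where i: "i < n" "M = cmod (v i)" by auto
  have "cmod (v r) \<le> M" if "r < n" for r unfolding M_def using that by (intro Max_ge) auto
  then have ge: "\<forall>r<n. cmod (v r) \<le> cmod (v i)" using i by auto
  have "v i \<noteq> 0"
  proof
    assume "v i = 0"
    then have "\<forall>r<n. v r = 0" using ge by auto
    then have "(\<Sum>r<n. (cmod (v r))\<^sup>2) = 0" by simp
    then show False using assms by simp
  qed
  then show ?thesis using i ge by blast
qed

lemma cover:
  assumes npos: "\<forall>n\<in>set ns. n > 0" and kpos: "k > 0" and A: "A \<in> Sigma_pure k ns"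
  shows "\<exists>ch \<in> Charts k ns. \<exists>x \<in> PiE (lbls k ns) (\<lambda>_. {-1..1}). A = Fm k ns ch x"
proof -
  define p where "p = length ns"
  obtain m c B where mk: "m \<le> k" and cB: "\<forall>l<m. 0 \<le> c l \<and> pure_product_state ns (B l)"
    and csum: "(\<Sum>l<m. c l) = 1" and Aeq: "A = (\<lambda>i j. \<Sum>l<m. complex_of_real (c l) * B l i j)"
    using A unfolding Sigma_pure_def convex_comb_of_def by blast
  have m0: "m > 0" using csum by (cases m) auto
  have "\<forall>l. \<exists>V. l < m \<longrightarrow> (\<forall>j<p. (\<Sum>r<ns!j. (cmod (V j r))\<^sup>2) = 1) \<and>
             B l = kron ns (map (\<lambda>j. rho0 (ns!j) (V j)) [0..<p])"
    using cB pps_rep unfolding p_def by blast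
  then obtain VV where VV: "\<And>l. l < m \<Longrightarrow> (\<forall>j<p. (\<Sum>r<ns!j. (cmod (VV l j r))\<^sup>2) = 1) \<and>
             B l = kron ns (map (\<lambda>j. rho0 (ns!j) (VV l j)) [0..<p])"
    by metis
  define c' where "c' l = (if l < m then c l else 0)" for l
  define V' where "V' l = VV (if l < m then l else 0)" for l
  have c'nn: "0 \<le> c' l" for l unfolding c'_def using cB by auto
  have c'sum: "(\<Sum>l<k. c' l) = 1"
  proof -
    have "(\<Sum>l<k. c' l) = (\<Sum>l<m. c' l)"
      using mk by (intro sum.mono_neutral_right) (auto simp: c'_def)
    also have "\<dots> = 1" using csum by (simp add: c'_def)
    finally show ?thesis .
  qed
  have c'le: "c' l \<le> 1" if "l < k" for l
  proof -
    have "c' l \<le> (\<Sum>l<k. c' l)" using that c'nn by (intro member_le_sum) auto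
    then show ?thesis using c'sum by simp
  qed
  have V'u: "(\<Sum>r<ns!j. (cmod (V' l j r))\<^sup>2) = 1" if "j < p" for l j
    using VV[of "if l < m then l else 0"] m0 that unfolding V'_def by auto
  have Aeq2: "A = (\<lambda>a b. \<Sum>l<k. complex_of_real (c' l) * kron ns (map (\<lambda>j. rho0 (ns!j) (V' l j)) [0..<p]) a b)"
  proof (intro ext)
    fix a b
    have "(\<Sum>l<k. complex_of_real (c' l) * kron ns (map (\<lambda>j. rho0 (ns!j) (V' l j)) [0..<p]) a b)
        = (\<Sum>l<m. complex_of_real (c' l) * kron ns (map (\<lambda>j. rho0 (ns!j) (V' l j)) [0..<p]) a b)"
      using mk by (intro sum.mono_neutral_right) (auto simp: c'_def)
    also have "\<dots> = (\<Sum>l<m. complex_of_real (c l) * B l a b)"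
      by (intro sum.cong) (auto simp: c'_def V'_def VV)
    finally show "A a b = (\<Sum>l<k. complex_of_real (c' l) * kron ns (map (\<lambda>j. rho0 (ns!j) (V' l j)) [0..<p]) a b)"
      unfolding Aeq by simp
  qed
  have "\<forall>lj. \<exists>i. (fst lj < k \<and> snd lj < p) \<longrightarrow> i < ns!(snd lj) \<and> V' (fst lj) (snd lj) i \<noteq> 0 \<and>
       (\<forall>r<ns!(snd lj). cmod (V' (fst lj) (snd lj) r) \<le> cmod (V' (fst lj) (snd lj) i))"
  proof
    fix lj :: "nat \<times> nat"
    show "\<exists>i. (fst lj < k \<and> snd lj < p) \<longrightarrow> i < ns!(snd lj) \<and> V' (fst lj) (snd lj) i \<noteq> 0 \<and>
       (\<forall>r<ns!(snd lj). cmod (V' (fst lj) (snd lj) r) \<le> cmod (V' (fst lj) (snd lj) i))"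
    proof (cases "fst lj < k \<and> snd lj < p")
      case True
      then have "ns!(snd lj) > 0" using npos unfolding p_def by auto
      then show ?thesis using chart_exists[OF _ V'u[of "snd lj" "fst lj"]] True by blast
    qed auto
  qed
  then obtain I where I: "\<And>lj. fst lj < k \<Longrightarrow> snd lj < p \<Longrightarrow> I lj < ns!(snd lj) \<and> V' (fst lj) (snd lj) (I lj) \<noteq> 0 \<and>
       (\<forall>r<ns!(snd lj). cmod (V' (fst lj) (snd lj) r) \<le> cmod (V' (fst lj) (snd lj) (I lj)))"
    by metis
  define ch where "ch = (\<lambda>l\<in>{..<k}. \<lambda>j\<in>{..<p}. I (l, j))"
  have chI: "ch l j = I (l, j)" if "l < k" "j < p" for l j using that unfolding ch_def by simp
  have chC: "ch \<in> Charts k ns" unfolding Charts_def ch_def restrict_PiE_iff p_def[symmetric] using I by auto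
  define w where "w l j r = V' l j r * inverse (V' l j (ch l j))" for l j r
  define x where "x = restrict (\<lambda>lab. case lab of Inl l \<Rightarrow> c' l
      | Inr (l, j, r', s) \<Rightarrow> (let r = (if r' < ch l j then r' else Suc r') in
           if s then Re (w l j r) else Im (w l j r))) (lbls k ns)"
  have wle: "cmod (w l j r) \<le> 1" if "l < k" "j < p" "r < ns!j" for l j r
  proof -
    have ne: "V' l j (ch l j) \<noteq> 0" and le: "cmod (V' l j r) \<le> cmod (V' l j (ch l j))"
      using I[of "(l,j)"] that chI by auto
    have "cmod (w l j r) = cmod (V' l j r) / cmod (V' l j (ch l j))"
      unfolding w_def by (simp add: norm_mult norm_inverse divide_inverse)
    also have "\<dots> \<le> 1" using ne le by simp
    finally show ?thesis .
  qed
  have xQ: "x \<in> PiE (lbls k ns) (\<lambda>_. {-1..1})"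
  proof (rule PiE_I)
    fix lab assume lab: "lab \<in> lbls k ns"
    show "x lab \<in> {-1..1}"
    proof (cases lab)
      case (Inl l)
      then have "l < k" using lab unfolding lbls_def by auto
      then show ?thesis using Inl lab c'nn[of l] c'le[of l] unfolding x_def by auto
    next
      case (Inr q)
      then obtain l j r' s where q: "lab = Inr (l, j, r', s)" by (cases q) auto
      then have lj: "l < k" "j < p" "r' < ns!j - 1" using lab unfolding lbls_def p_def by auto
      define r where "r = (if r' < ch l j then r' else Suc r')"
      have r: "r < ns!j" unfolding r_def using lj chI[of l j] I[of "(l,j)"] by auto
      have "\<bar>Re (w l j r)\<bar> \<le> 1" "\<bar>Im (w l j r)\<bar> \<le> 1"
        using wle[OF lj(1,2) r] abs_Re_le_cmod abs_Im_le_cmod order_trans by blast+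
      moreover have "x lab = (if s then Re (w l j r) else Im (w l j r))"
        using lab unfolding x_def q r_def by (simp add: Let_def)
      ultimately show ?thesis by (cases s) auto
    qed
  next
    fix lab assume "lab \<notin> lbls k ns" then show "x lab = undefined" unfolding x_def by simp
  qed
  have coefeq: "coef k x l = c' l" if "l < k" for l
  proof (cases "l < k - 1")
    case True
    then have "Inl l \<in> lbls k ns" unfolding lbls_def by auto
    then show ?thesis unfolding coef_def x_def using True by simp
  next
    case False
    then have l: "l = k - 1" using that by simp
    have "(\<Sum>l'<k-1. x (Inl l')) = (\<Sum>l'<k-1. c' l')"
      by (intro sum.cong) (auto simp: x_def lbls_def)
    moreover have "(\<Sum>l<k. c' l) = (\<Sum>l'<k-1. c' l') + c' (k-1)"
      using kpos by (metis Suc_diff_1 sum.lessThan_Suc)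
    ultimately show ?thesis unfolding coef_def using False l c'sum by simp
  qed
  have zceq: "zc ch x l j r = w l j r" if "l < k" "j < p" "r < ns!j" for l j r
  proof (cases "r = ch l j")
    case True
    have "V' l j (ch l j) \<noteq> 0" using I[of "(l,j)"] that chI by auto
    then show ?thesis unfolding zc_def w_def using True by simp
  next
    case False
    have ic: "ch l j < ns!j" using I[of "(l,j)"] that chI by auto
    have ri: "ridx (ch l j) r < ns!j - 1" unfolding ridx_def using that False ic by auto
    have m: "Inr (l, j, ridx (ch l j) r, s) \<in> lbls k ns" for s
      unfolding lbls_def using that ri by (auto simp: p_def)
    have rr: "(if ridx (ch l j) r < ch l j then ridx (ch l j) r else Suc (ridx (ch l j) r)) = r"
      unfolding ridx_def using False by auto
    have "x (Inr (l, j, ridx (ch l j) r, s)) = (if s then Re (w l j r) else Im (w l j r))" for s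
      using m unfolding x_def by (simp add: Let_def rr)
    then show ?thesis unfolding zc_def using False by (simp add: complex_eq_iff)
  qed
  have rhoeq: "rhoc (ns!j) (zc ch x l j) = rho0 (ns!j) (V' l j)" if "l < k" "j < p" for l j
  proof -
    have "rhoc (ns!j) (zc ch x l j) = rhoc (ns!j) (w l j)"
      using zceq that by (intro rhoc_cong) auto
    also have "\<dots> = rhoc (ns!j) (V' l j)"
    proof -
      have "V' l j (ch l j) \<noteq> 0" using I[of "(l,j)"] that chI by auto
      then show ?thesis unfolding w_def by (intro rhoc_scale) simp
    qed
    also have "\<dots> = rho0 (ns!j) (V' l j)" using V'u that by (intro rhoc_unit) auto
    finally show ?thesis .
  qed
  have "A = Fm k ns ch x"
  proof (intro ext)
    fix a b
    have "Fm k ns ch x a b = (\<Sum>l<k. complex_of_real (c' l) * kron ns (map (\<lambda>j. rho0 (ns!j) (V' l j)) [0..<p]) a b)"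
      unfolding Fm_def p_def[symmetric]
    proof (intro sum.cong refl)
      fix l assume l: "l \<in> {..<k}"
      have mq: "map (\<lambda>j. rhoc (ns!j) (zc ch x l j)) [0..<p] = map (\<lambda>j. rho0 (ns!j) (V' l j)) [0..<p]"
        using l rhoeq by (intro map_cong) auto
      have ce: "coef k x l = c' l" using l coefeq by simp
      show "complex_of_real (coef k x l) * kron ns (map (\<lambda>j. rhoc (ns!j) (zc ch x l j)) [0..<p]) a b =
          complex_of_real (c' l) * kron ns (map (\<lambda>j. rho0 (ns!j) (V' l j)) [0..<p]) a b"
        unfolding mq ce by (rule refl)
    qed
    then show "A a b = Fm k ns ch x a b" using Aeq2 by simp
  qed
  then show ?thesis using chC xQ by blast
qed




lemma prod_list_sq: "(\<Prod>n\<leftarrow>ns. real n ^ 2) = real (prod_list ns) ^ 2"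
  by (induction ns) (simp_all add: power_mult_distrib)

lemma hcoord_lip:
  assumes "N > 0" "i < N * N - 1"
    and "\<And>a b. a < N \<Longrightarrow> b < N \<Longrightarrow> cmod (M a b - M' a b) \<le> C"
  shows "\<bar>hcoord N M i - hcoord N M' i\<bar> \<le> C"
proof -
  have iN: "i < N * N" using assms(2) by simp
  have a: "i div N < N" using iN by (simp add: less_mult_imp_div_less)
  have b: "i mod N < N" using assms(1) by simp
  have R: "\<bar>Re u - Re v\<bar> \<le> C" "\<bar>Im u - Im v\<bar> \<le> C" if "cmod (u - v) \<le> C" for u v
    using that abs_Re_le_cmod[of "u - v"] abs_Im_le_cmod[of "u - v"] by auto
  show ?thesis unfolding hcoord_def using assms(2) a b
    by (auto simp: Let_def intro!: R assms(3))
qed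

lemma partB:
  assumes "length ns \<ge> 1" and npos: "\<forall>n\<in>set ns. n > 0" and kpos: "k > 0"
    and hk: "real k < (\<Prod>n\<leftarrow>ns. real n ^ 2) / (1 - 2 * real (length ns) + (\<Sum>n\<leftarrow>ns. 2 * real n))"
  shows "hcoord (prod_list ns) ` Sigma_pure k ns \<in>
           null_sets (completion (PiM {..<prod_list ns * prod_list ns - 1} (\<lambda>_. lborel)))"
proof -
  define N where "N = prod_list ns"
  define d where "d = N * N - 1"
  define p where "p = length ns"
  define S where "S = (\<Sum>j<p. (ns!j - 1) * 2)"
  define Q where "Q = PiE (lbls k ns) (\<lambda>_. {-1..1::real})"
  have N0: "N > 0" unfolding N_def using npos by (metis gr0I prod_list_zero_iff)
  have s1: "(\<Sum>n\<leftarrow>ns. 2 * real n) = (\<Sum>j<p. 2 * real (ns!j))"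
    by (simp add: sum_list_sum_nth atLeast0LessThan p_def)
  have s2: "real S = (\<Sum>j<p. 2 * real (ns!j)) - 2 * real p"
  proof -
    have "real S = (\<Sum>j<p. 2 * real (ns!j) - 2)"
      unfolding S_def of_nat_sum
    proof (intro sum.cong refl)
      fix j assume "j \<in> {..<p}"
      then have "ns!j \<ge> 1" using npos unfolding p_def by (simp add: Suc_leI)
      then show "real ((ns ! j - 1) * 2) = 2 * real (ns ! j) - 2" by (simp add: of_nat_diff)
    qed
    also have "\<dots> = (\<Sum>j<p. 2 * real (ns!j)) - 2 * real p" by (simp add: sum_subtractf)
    finally show ?thesis .
  qed
  have den: "1 - 2 * real (length ns) + (\<Sum>n\<leftarrow>ns. 2 * real n) = 1 + real S"
    using s1 s2 unfolding p_def by simp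
  have "real k * (1 + real S) < real N ^ 2"
    using hk unfolding den prod_list_sq N_def[symmetric]
    by (simp add: pos_less_divide_eq add_pos_nonneg)
  then have "real (k * (1 + S)) < real (N * N)" by (simp add: power2_eq_square distrib_left)
  then have kS: "k * (1 + S) < N * N" by (simp only: of_nat_less_iff)
  have card: "card (lbls k ns) < d"
  proof -
    have "card (lbls k ns) = (k - 1) + k * S" unfolding card_lbls S_def p_def by simp
    moreover have "k * (1 + S) = k + k * S" by (simp add: algebra_simps)
    ultimately show ?thesis unfolding d_def using kS kpos by linarith
  qed
  have sub: "hcoord N ` Sigma_pure k ns \<subseteq> (\<Union>ch\<in>Charts k ns. (\<lambda>x. hcoord N (Fm k ns ch x)) ` Q)"
  proof
    fix z assume "z \<in> hcoord N ` Sigma_pure k ns"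
    then obtain A where A: "A \<in> Sigma_pure k ns" "z = hcoord N A" by auto
    obtain ch x where "ch \<in> Charts k ns" "x \<in> Q" "A = Fm k ns ch x"
      using cover[OF npos kpos A(1)] unfolding Q_def by blast
    then show "z \<in> (\<Union>ch\<in>Charts k ns. (\<lambda>x. hcoord N (Fm k ns ch x)) ` Q)" using A by blast
  qed
  have null: "(\<lambda>x. hcoord N (Fm k ns ch x)) ` Q \<in> null_sets (completion (PiM {..<d} (\<lambda>_. lborel)))"
    if ch: "ch \<in> Charts k ns" for ch
  proof -
    have chl: "ch l j < ns!j" if "l < k" "j < length ns" for l j
      using ch that unfolding Charts_def by (auto simp: PiE_iff)
    obtain L where L: "L \<ge> 0" "\<forall>ab\<in>{..<N}\<times>{..<N}. \<forall>x\<in>Q. \<forall>y\<in>Q.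
        cmod ((\<lambda>ab x. Fm k ns ch x (fst ab) (snd ab)) ab x - (\<lambda>ab x. Fm k ns ch x (fst ab) (snd ab)) ab y) \<le> L * l1 (lbls k ns) x y"
    proof -
      have lF: "lipb (lbls k ns) (\<lambda>x. Fm k ns ch x a b)" for a b
        by (rule lipb_Fm) (rule chl)
      have "\<exists>L\<ge>0. \<forall>ab\<in>{..<N}\<times>{..<N}. \<forall>x\<in>Q. \<forall>y\<in>Q.
        cmod ((\<lambda>ab x. Fm k ns ch x (fst ab) (snd ab)) ab x - (\<lambda>ab x. Fm k ns ch x (fst ab) (snd ab)) ab y) \<le> L * l1 (lbls k ns) x y"
        unfolding Q_def by (rule lipb_uniform) (auto simp: lF)
      then show ?thesis using that by blast
    qed
    show ?thesis unfolding Q_def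
    proof (rule lowdim_null[OF finite_lbls card L(1)])
      fix x y :: "lbl \<Rightarrow> real" and i assume x: "x \<in> lbls k ns \<rightarrow>\<^sub>E {-1..1}" and y: "y \<in> lbls k ns \<rightarrow>\<^sub>E {-1..1}" and i: "i < d"
      show "\<bar>hcoord N (Fm k ns ch x) i - hcoord N (Fm k ns ch y) i\<bar> \<le> L * l1 (lbls k ns) x y"
        using N0 i unfolding d_def
      proof (rule hcoord_lip)
        fix a b assume "a < N" "b < N"
        then show "cmod (Fm k ns ch x a b - Fm k ns ch y a b) \<le> L * l1 (lbls k ns) x y"
          using L(2) x y unfolding Q_def by force
      qed
    next
      fix x :: "lbl \<Rightarrow> real" show "hcoord N (Fm k ns ch x) \<in> {..<d} \<rightarrow>\<^sub>E UNIV"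
        unfolding hcoord_def d_def by simp
    qed
  qed
  have "(\<Union>ch\<in>Charts k ns. (\<lambda>x. hcoord N (Fm k ns ch x)) ` Q) \<in> null_sets (completion (PiM {..<d} (\<lambda>_. lborel)))"
    using null finite_Charts by (intro null_sets_UN') (auto intro: countable_finite)
  then show ?thesis using sub null_sets_completion_subset unfolding N_def d_def by blast
qed




definition Phi :: "nat \<Rightarrow> nat list \<Rightarrow> (nat \<Rightarrow> real) \<times> (nat \<Rightarrow> nat \<Rightarrow> nat \<Rightarrow> complex) \<Rightarrow> cmat" where
  "Phi k ns cV = (\<lambda>a b. \<Sum>l<k. complex_of_real (fst cV l) *
      kron ns (map (\<lambda>j. rho0 (ns!j) (snd cV l j)) [0..<length ns]) a b)"

definition Tset :: "nat \<Rightarrow> nat list \<Rightarrow> ((nat \<Rightarrow> real) \<times> (nat \<Rightarrow> nat \<Rightarrow> nat \<Rightarrow> complex)) set" where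
  "Tset k ns = {(c, V). (\<forall>l. 0 \<le> c l) \<and> (\<forall>l. k \<le> l \<longrightarrow> c l = 0) \<and> (\<Sum>l<k. c l) = 1 \<and>
      (\<forall>l j r. \<not> (l < k \<and> j < length ns \<and> r < ns!j) \<longrightarrow> V l j r = 0) \<and>
      (\<forall>l j. l < k \<and> j < length ns \<longrightarrow> (\<Sum>r<ns!j. (cmod (V l j r))\<^sup>2) = 1)}"

lemma pure_state_rho0:
  fixes v :: "nat \<Rightarrow> complex"
  assumes "(\<Sum>r<n. (cmod (v r))\<^sup>2) = 1"
  shows "pure_state n (rho0 n v)"
proof -
  have dm: "density_matrix n (rho0 n v)"
    unfolding density_matrix_def
  proof (intro conjI allI impI)
    show "supported_in n (rho0 n v)" unfolding supported_in_def rho0_def by auto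
  next
    fix i j assume "i < n" "j < n"
    then show "rho0 n v j i = cnj (rho0 n v i j)" unfolding rho0_def by simp
  next
    fix x :: "nat \<Rightarrow> complex"
    define z where "z = (\<Sum>i<n. cnj (x i) * v i)"
    have "(\<Sum>i<n. \<Sum>j<n. cnj (x i) * rho0 n v i j * x j) = (\<Sum>i<n. \<Sum>j<n. (cnj (x i) * v i) * (cnj (v j) * x j))"
      unfolding rho0_def by (intro sum.cong refl) (simp add: algebra_simps)
    also have "\<dots> = (\<Sum>i<n. cnj (x i) * v i) * (\<Sum>j<n. cnj (v j) * x j)"
      by (rule sum_product[symmetric])
    also have "\<dots> = z * cnj z"
    proof -
      have "cnj z = (\<Sum>j<n. cnj (v j) * x j)" unfolding z_def cnj_sum
        by (intro sum.cong refl) (simp add: mult.commute)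
      then show ?thesis unfolding z_def by simp
    qed
    also have "\<dots> = complex_of_real ((cmod z)\<^sup>2)" by (rule complex_norm_square[symmetric])
    finally show "0 \<le> Re (\<Sum>i<n. \<Sum>j<n. cnj (x i) * rho0 n v i j * x j)" by simp
  next
    have "(\<Sum>i<n. rho0 n v i i) = (\<Sum>i<n. v i * cnj (v i))" unfolding rho0_def by simp
    also have "\<dots> = 1" by (simp only: sum_cnj_real assms of_real_1)
    finally show "(\<Sum>i<n. rho0 n v i i) = 1" .
  qed
  show ?thesis unfolding pure_state_def using dm assms by (auto simp: rho0_def)
qed

lemma pure_state_dm: "pure_state n A \<Longrightarrow> density_matrix n A"
  unfolding pure_state_def by simp

lemma pps_product_dm: "pure_product_state ns A \<Longrightarrow> product_dm ns A"
  unfolding pure_product_state_def product_dm_def using pure_state_dm by blast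

lemma Sigma_pure_alt: "Sigma_pure k ns = {A. \<exists>m\<le>k. convex_comb_of (pure_product_state ns) m A}"
proof -
  have "convex_comb_of (pure_product_state ns) m A \<Longrightarrow> convex_comb_of (product_dm ns) m A" for m A
    unfolding convex_comb_of_def using pps_product_dm by blast
  then show ?thesis unfolding Sigma_pure_def Sigma_sep_def by blast
qed

lemma Phi_sub: "Phi k ns ` Tset k ns \<subseteq> Sigma_pure k ns"
proof
  fix A assume "A \<in> Phi k ns ` Tset k ns"
  then obtain c V where cV: "(c, V) \<in> Tset k ns" "A = Phi k ns (c, V)" by auto
  have "pure_product_state ns (kron ns (map (\<lambda>j. rho0 (ns!j) (V l j)) [0..<length ns]))" if "l < k" for l
    unfolding pure_product_state_def
  proof (intro exI[of _ "map (\<lambda>j. rho0 (ns!j) (V l j)) [0..<length ns]"] conjI allI impI)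
    fix i assume "i < length ns"
    then show "pure_state (ns ! i) (map (\<lambda>j. rho0 (ns!j) (V l j)) [0..<length ns] ! i)"
      using cV(1) that unfolding Tset_def by (auto intro!: pure_state_rho0)
  qed simp_all
  then have "convex_comb_of (pure_product_state ns) k A"
    unfolding convex_comb_of_def cV(2) Phi_def using cV(1) unfolding Tset_def
    by (intro exI[of _ c] exI[of _ "\<lambda>l. kron ns (map (\<lambda>j. rho0 (ns!j) (V l j)) [0..<length ns])"]) auto
  then show "A \<in> Sigma_pure k ns" unfolding Sigma_pure_alt by blast
qed

lemma rho0_cong: "(\<And>r. r < n \<Longrightarrow> v r = v' r) \<Longrightarrow> rho0 n v = rho0 n v'"
  unfolding rho0_def by (intro ext) auto

lemma Phi_sup:
  assumes kpos: "k > 0"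
  shows "Sigma_pure k ns \<subseteq> Phi k ns ` Tset k ns"
proof
  fix A assume A: "A \<in> Sigma_pure k ns"
  define p where "p = length ns"
  obtain m c B where mk: "m \<le> k" and cB: "\<forall>l<m. 0 \<le> c l \<and> pure_product_state ns (B l)"
    and csum: "(\<Sum>l<m. c l) = 1" and Aeq: "A = (\<lambda>i j. \<Sum>l<m. complex_of_real (c l) * B l i j)"
    using A unfolding Sigma_pure_def convex_comb_of_def by blast
  have m0: "m > 0" using csum by (cases m) auto
  have "\<forall>l. \<exists>V. l < m \<longrightarrow> (\<forall>j<p. (\<Sum>r<ns!j. (cmod (V j r))\<^sup>2) = 1) \<and>
             B l = kron ns (map (\<lambda>j. rho0 (ns!j) (V j)) [0..<p])"
    using cB pps_rep unfolding p_def by blast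
  then obtain VV where VV: "\<And>l. l < m \<Longrightarrow> (\<forall>j<p. (\<Sum>r<ns!j. (cmod (VV l j r))\<^sup>2) = 1) \<and>
             B l = kron ns (map (\<lambda>j. rho0 (ns!j) (VV l j)) [0..<p])"
    by metis
  define c' where "c' l = (if l < m then c l else 0)" for l
  define V' where "V' l j r = (if l < k \<and> j < p \<and> r < ns!j then VV (if l < m then l else 0) j r else 0)" for l j r
  have c'sum: "(\<Sum>l<k. c' l) = 1"
  proof -
    have "(\<Sum>l<k. c' l) = (\<Sum>l<m. c' l)"
      using mk by (intro sum.mono_neutral_right) (auto simp: c'_def)
    also have "\<dots> = 1" using csum by (simp add: c'_def)
    finally show ?thesis .
  qed
  have c1: "\<forall>l. 0 \<le> c' l" unfolding c'_def using cB by auto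
  have c2: "\<forall>l. k \<le> l \<longrightarrow> c' l = 0" unfolding c'_def using mk by auto
  have c4: "\<forall>l j r. \<not> (l < k \<and> j < length ns \<and> r < ns!j) \<longrightarrow> V' l j r = 0"
    unfolding V'_def p_def by auto
  have c5: "\<forall>l j. l < k \<and> j < length ns \<longrightarrow> (\<Sum>r<ns!j. (cmod (V' l j r))\<^sup>2) = 1"
  proof (intro allI impI)
    fix l j assume lj: "l < k \<and> j < length ns"
    have "(\<Sum>r<ns!j. (cmod (V' l j r))\<^sup>2) = (\<Sum>r<ns!j. (cmod (VV (if l < m then l else 0) j r))\<^sup>2)"
      using lj unfolding V'_def p_def by (intro sum.cong) auto
    also have "\<dots> = 1" using VV[of "if l < m then l else 0"] m0 lj unfolding p_def by auto
    finally show "(\<Sum>r<ns!j. (cmod (V' l j r))\<^sup>2) = 1" .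
  qed
  have T: "(c', V') \<in> Tset k ns" unfolding Tset_def using c1 c2 c'sum c4 c5 by blast
  have "A = Phi k ns (c', V')"
  proof (intro ext)
    fix a b
    have "Phi k ns (c', V') a b = (\<Sum>l<m. complex_of_real (c' l) * kron ns (map (\<lambda>j. rho0 (ns!j) (V' l j)) [0..<p]) a b)"
      unfolding Phi_def p_def fst_conv snd_conv using mk by (intro sum.mono_neutral_right) (auto simp: c'_def)
    also have "\<dots> = (\<Sum>l<m. complex_of_real (c l) * B l a b)"
    proof (intro sum.cong refl)
      fix l assume l: "l \<in> {..<m}"
      have mq: "map (\<lambda>j. rho0 (ns!j) (V' l j)) [0..<p] = map (\<lambda>j. rho0 (ns!j) (VV l j)) [0..<p]"
        using l mk by (intro map_cong refl rho0_cong) (auto simp: V'_def)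
      show "complex_of_real (c' l) * kron ns (map (\<lambda>j. rho0 (ns!j) (V' l j)) [0..<p]) a b = complex_of_real (c l) * B l a b"
        unfolding mq using l VV[of l] by (simp add: c'_def)
    qed
    finally show "A a b = Phi k ns (c', V') a b" unfolding Aeq by simp
  qed
  then show "A \<in> Phi k ns ` Tset k ns" using T by blast
qed

lemma cont_kron:
  assumes "\<And>x. length (As x) = length ns"
    and "\<And>l a b. l < length ns \<Longrightarrow> continuous_on S (\<lambda>x. (As x ! l) a b)"
  shows "continuous_on S (\<lambda>x. kron ns (As x) a b)"
  using assms
proof (induction ns arbitrary: As a b)
  case Nil
  then show ?case by simp
next
  case (Cons n ns)
  have eq: "As x = hd (As x) # tl (As x)" for x using Cons.prems(1)[of x] by (cases "As x") auto
  have IH: "continuous_on S (\<lambda>x. kron ns (tl (As x)) a' b')" for a' b'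
    using Cons.prems by (intro Cons.IH) (auto simp: nth_tl)
  have H: "continuous_on S (\<lambda>x. hd (As x) a' b')" for a' b'
  proof -
    have "hd (As x) = As x ! 0" for x
    proof -
      have "As x \<noteq> []" using Cons.prems(1)[of x] by auto
      then show ?thesis by (rule hd_conv_nth)
    qed
    then show ?thesis using Cons.prems(2)[of 0 a' b'] by simp
  qed
  have K: "kron (n#ns) (As x) a b = (if a < n * prod_list ns \<and> b < n * prod_list ns then
      hd (As x) (a div prod_list ns) (b div prod_list ns) * kron ns (tl (As x)) (a mod prod_list ns) (b mod prod_list ns) else 0)" for x
    by (subst eq) (simp only: kron.simps Let_def)
  show ?case
  proof (cases "a < n * prod_list ns \<and> b < n * prod_list ns")
    case True
    show ?thesis unfolding K if_P[OF True] by (rule continuous_on_mult[OF H IH])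
  next
    case False
    show ?thesis unfolding K if_not_P[OF False] by (rule continuous_on_const)
  qed
qed

lemma cont_coord3:
  "continuous_on S (\<lambda>x::(nat \<Rightarrow> real) \<times> (nat \<Rightarrow> nat \<Rightarrow> nat \<Rightarrow> complex). snd x l j r)"
proof -
  have "continuous_on S (\<lambda>x::(nat \<Rightarrow> real) \<times> (nat \<Rightarrow> nat \<Rightarrow> nat \<Rightarrow> complex). snd x)"
    by (rule continuous_on_snd[OF continuous_on_id])
  then have "continuous_on S (\<lambda>x::(nat \<Rightarrow> real) \<times> (nat \<Rightarrow> nat \<Rightarrow> nat \<Rightarrow> complex). snd x l)"
    by (rule continuous_on_product_then_coordinatewise)
  then have "continuous_on S (\<lambda>x::(nat \<Rightarrow> real) \<times> (nat \<Rightarrow> nat \<Rightarrow> nat \<Rightarrow> complex). snd x l j)"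
    by (rule continuous_on_product_then_coordinatewise)
  then show ?thesis by (rule continuous_on_product_then_coordinatewise)
qed

lemma cont_coord1:
  "continuous_on S (\<lambda>x::(nat \<Rightarrow> real) \<times> (nat \<Rightarrow> nat \<Rightarrow> nat \<Rightarrow> complex). fst x l)"
proof -
  have "continuous_on S (\<lambda>x::(nat \<Rightarrow> real) \<times> (nat \<Rightarrow> nat \<Rightarrow> nat \<Rightarrow> complex). fst x)"
    by (rule continuous_on_fst[OF continuous_on_id])
  then show ?thesis by (rule continuous_on_product_then_coordinatewise)
qed

lemma cont_Phi: "continuous_on S (Phi k ns)"
proof (intro continuous_on_coordinatewise_then_product)
  fix a b
  show "continuous_on S (\<lambda>x. Phi k ns x a b)" unfolding Phi_def
  proof (intro continuous_on_sum continuous_on_mult continuous_on_of_real cont_coord1 cont_kron)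
    fix l l' a' b' assume l': "l' < length ns"
    show "continuous_on S (\<lambda>x. (map (\<lambda>j. rho0 (ns ! j) (snd x l j)) [0..<length ns] ! l') a' b')"
    proof (cases "a' < ns!l' \<and> b' < ns!l'")
      case True
      have "continuous_on S (\<lambda>x. snd x l l' a' * cnj (snd x l l' b'))"
        by (intro continuous_on_mult continuous_on_cnj cont_coord3)
      then show ?thesis using l' True by (simp add: rho0_def)
    next
      case False
      have c: "(a' < ns!l' \<and> b' < ns!l') = False" using False by simp
      have z: "(map (\<lambda>j. rho0 (ns ! j) (snd x l j)) [0..<length ns] ! l') a' b' = 0" for x
        using l' by (simp only: nth_map_upt add_0 rho0_def c if_False)
      show ?thesis unfolding z by (rule continuous_on_const)
    qed
  qed simp
qed




lemma compact_PiE_UNIV: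
  fixes K :: "'i \<Rightarrow> 'b::topological_space set"
  assumes "\<And>i. compact (K i)"
  shows "compact (PiE UNIV K)"
proof -
  have "compactin (product_topology (\<lambda>_. euclidean) UNIV) (PiE UNIV K)"
    using assms by (simp add: compactin_PiE)
  then show ?thesis by (simp add: euclidean_product_topology)
qed

definition Box :: "((nat \<Rightarrow> real) \<times> (nat \<Rightarrow> nat \<Rightarrow> nat \<Rightarrow> complex)) set" where
  "Box = PiE UNIV (\<lambda>_. {0..1}) \<times> PiE UNIV (\<lambda>_. PiE UNIV (\<lambda>_. PiE UNIV (\<lambda>_. cball 0 1)))"

lemma compact_Box: "compact Box"
  unfolding Box_def
  by (intro compact_Times compact_PiE_UNIV compact_Icc compact_cball)

lemma Tset_Box: "Tset k ns \<subseteq> Box"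
proof
  fix z assume z: "z \<in> Tset k ns"
  obtain c V where zcV: "z = (c, V)" by (cases z)
  have T: "\<forall>l. 0 \<le> c l" "\<forall>l. k \<le> l \<longrightarrow> c l = 0" "(\<Sum>l<k. c l) = 1"
      "\<forall>l j r. \<not> (l < k \<and> j < length ns \<and> r < ns!j) \<longrightarrow> V l j r = 0"
      "\<forall>l j. l < k \<and> j < length ns \<longrightarrow> (\<Sum>r<ns!j. (cmod (V l j r))\<^sup>2) = 1"
    using z unfolding zcV Tset_def by auto
  have c1: "c l \<le> 1" for l
  proof (cases "l < k")
    case True
    have "c l \<le> (\<Sum>l<k. c l)" using True T(1) by (intro member_le_sum) auto
    then show ?thesis using T(3) by simp
  next
    case False then show ?thesis using T(2) by simp
  qed
  have v1: "cmod (V l j r) \<le> 1" for l j r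
  proof (cases "l < k \<and> j < length ns \<and> r < ns!j")
    case True
    have "(cmod (V l j r))\<^sup>2 \<le> (\<Sum>r<ns!j. (cmod (V l j r))\<^sup>2)"
      using True by (intro member_le_sum) auto
    then have "(cmod (V l j r))\<^sup>2 \<le> 1\<^sup>2" using T(5) True by simp
    then show ?thesis by (rule power2_le_imp_le) simp
  next
    case False then show ?thesis using T(4) by simp
  qed
  show "z \<in> Box" unfolding Box_def zcV using T(1) c1 v1 by (auto simp: PiE_iff)
qed

lemma open_const_Collect: "open {x. P}"
  by (cases P) auto

lemma closed_Tset: "closed (Tset k ns)"
proof -
  have eq: "Tset k ns = {x. (\<forall>l. 0 \<le> fst x l) \<and> (\<forall>l. k \<le> l \<longrightarrow> fst x l = 0) \<and> (\<Sum>l<k. fst x l) = 1 \<and>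
      (\<forall>l j r. \<not> (l < k \<and> j < length ns \<and> r < ns!j) \<longrightarrow> snd x l j r = 0) \<and>
      (\<forall>l j. l < k \<and> j < length ns \<longrightarrow> (\<Sum>r<ns!j. (cmod (snd x l j r))\<^sup>2) = 1)}"
    unfolding Tset_def by auto
  show ?thesis unfolding eq
    by (intro closed_Collect_conj closed_Collect_all closed_Collect_imp open_const_Collect
        closed_Collect_le closed_Collect_eq continuous_on_const cont_coord1 cont_coord3
        continuous_on_sum continuous_on_power continuous_on_norm continuous_on_of_real)
qed

lemma compact_Tset: "compact (Tset k ns)"
proof -
  have "compact (Tset k ns \<inter> Box)" by (intro closed_Int_compact closed_Tset compact_Box)
  moreover have "Tset k ns \<inter> Box = Tset k ns" using Tset_Box by blast
  ultimately show ?thesis by simp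
qed

lemma compact_Sigma_pure:
  assumes "k > 0" shows "compact (Sigma_pure k ns)"
proof -
  have "Sigma_pure k ns = Phi k ns ` Tset k ns" using Phi_sub Phi_sup[OF assms] by blast
  then show ?thesis using compact_continuous_image[OF cont_Phi compact_Tset] by simp
qed




definition dl :: "nat \<Rightarrow> real" where "dl l = (if l = 0 then 1 else 0)"
definition e0 :: "nat \<Rightarrow> complex" where "e0 r = (if r = 0 then 1 else 0)"

definition phs :: "complex \<Rightarrow> complex" where
  "phs z = (if z = 0 then 1 else z / complex_of_real (cmod z))"

definition ww :: "(nat \<Rightarrow> nat \<Rightarrow> nat \<Rightarrow> complex) \<Rightarrow> nat \<Rightarrow> real \<Rightarrow> nat \<Rightarrow> complex" where
  "ww V j t r = complex_of_real (1 - t) * V 0 j r + complex_of_real t * phs (V 0 j 0) * e0 r"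

definition nrm :: "nat list \<Rightarrow> (nat \<Rightarrow> nat \<Rightarrow> nat \<Rightarrow> complex) \<Rightarrow> nat \<Rightarrow> real \<Rightarrow> real" where
  "nrm ns V j t = sqrt (\<Sum>r<ns!j. (cmod (ww V j t r))\<^sup>2)"

definition WW :: "nat list \<Rightarrow> (nat \<Rightarrow> nat \<Rightarrow> nat \<Rightarrow> complex) \<Rightarrow> real \<Rightarrow> nat \<Rightarrow> nat \<Rightarrow> nat \<Rightarrow> complex" where
  "WW ns V t l j r = (if l = 0 \<and> j < length ns then ww V j t r / complex_of_real (nrm ns V j t) else V l j r)"

lemma cmod_phs: "cmod (phs z) = 1"
  unfolding phs_def by (auto simp: norm_divide)

lemma dl_sum: "k > 0 \<Longrightarrow> (\<Sum>l<k. dl l) = 1"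
proof -
  assume "k > 0"
  then have "(\<Sum>l<k. dl l) = (\<Sum>l\<in>{0}. dl l)"
    by (intro sum.mono_neutral_right) (auto simp: dl_def)
  then show ?thesis by (simp add: dl_def)
qed

lemma Tset_D:
  assumes "(c, V) \<in> Tset k ns"
  shows "\<forall>l. 0 \<le> c l" "\<forall>l. k \<le> l \<longrightarrow> c l = 0" "(\<Sum>l<k. c l) = 1"
      "\<forall>l j r. \<not> (l < k \<and> j < length ns \<and> r < ns!j) \<longrightarrow> V l j r = 0"
      "\<forall>l j. l < k \<and> j < length ns \<longrightarrow> (\<Sum>r<ns!j. (cmod (V l j r))\<^sup>2) = 1"
  using assms unfolding Tset_def by auto

lemma Tset_I:
  assumes "\<forall>l. 0 \<le> c l" "\<forall>l. k \<le> l \<longrightarrow> c l = 0" "(\<Sum>l<k. c l) = 1"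
      "\<forall>l j r. \<not> (l < k \<and> j < length ns \<and> r < ns!j) \<longrightarrow> V l j r = 0"
      "\<forall>l j. l < k \<and> j < length ns \<longrightarrow> (\<Sum>r<ns!j. (cmod (V l j r))\<^sup>2) = 1"
  shows "(c, V) \<in> Tset k ns"
  using assms unfolding Tset_def by auto

lemma seg1_T:
  assumes T: "(c, V) \<in> Tset k ns" and k: "k > 0" and t: "t \<in> {0..1}"
  shows "((\<lambda>l. (1 - t) * c l + t * dl l), V) \<in> Tset k ns"
proof (rule Tset_I)
  note D = Tset_D[OF T]
  show "\<forall>l. 0 \<le> (1 - t) * c l + t * dl l" using D(1) t by (auto simp: dl_def)
  show "\<forall>l. k \<le> l \<longrightarrow> (1 - t) * c l + t * dl l = 0" using D(2) k by (auto simp: dl_def)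
  have "(\<Sum>l<k. (1 - t) * c l + t * dl l) = (1 - t) * (\<Sum>l<k. c l) + t * (\<Sum>l<k. dl l)"
    by (simp add: sum.distrib sum_distrib_left)
  then show "(\<Sum>l<k. (1 - t) * c l + t * dl l) = 1" using D(3) dl_sum[OF k] by simp
qed (use Tset_D[OF T] in auto)

lemma ww_pos:
  assumes T: "(c, V) \<in> Tset k ns" and k: "k > 0" and t: "t \<in> {0..1}" and j: "j < length ns"
    and npos: "ns!j > 0"
  shows "(\<Sum>r<ns!j. (cmod (ww V j t r))\<^sup>2) > 0"
proof (cases "t = 0")
  case True
  then have "(\<Sum>r<ns!j. (cmod (ww V j t r))\<^sup>2) = (\<Sum>r<ns!j. (cmod (V 0 j r))\<^sup>2)"
    unfolding ww_def by simp
  also have "\<dots> = 1" using Tset_D(5)[OF T] k j by auto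
  finally show ?thesis by simp
next
  case False
  then have t0: "t > 0" using t by simp
  have w0: "ww V j t 0 \<noteq> 0"
  proof (cases "V 0 j 0 = 0")
    case True
    then show ?thesis unfolding ww_def phs_def e0_def using t0 by simp
  next
    case False
    have "t / cmod (V 0 j 0) > 0" using t0 False by (simp add: divide_pos_pos)
    then have pos: "(1 - t) + t / cmod (V 0 j 0) > 0" using t by simp
    have "ww V j t 0 = complex_of_real (1 - t) * V 0 j 0 + complex_of_real t * (V 0 j 0 / complex_of_real (cmod (V 0 j 0)))"
      unfolding ww_def phs_def e0_def using False by simp
    also have "\<dots> = V 0 j 0 * (complex_of_real (1 - t) + complex_of_real t / complex_of_real (cmod (V 0 j 0)))"
      by (simp add: ring_distribs divide_inverse mult_ac)
    also have "\<dots> = V 0 j 0 * complex_of_real ((1 - t) + t / cmod (V 0 j 0))" by simp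
    finally have "ww V j t 0 = V 0 j 0 * complex_of_real ((1 - t) + t / cmod (V 0 j 0))" .
    then show ?thesis using False pos by (metis mult_eq_0_iff of_real_eq_0_iff order_less_irrefl)
  qed
  have "(cmod (ww V j t 0))\<^sup>2 \<le> (\<Sum>r<ns!j. (cmod (ww V j t r))\<^sup>2)"
    using npos by (intro member_le_sum) auto
  moreover have "(cmod (ww V j t 0))\<^sup>2 > 0" using w0 by simp
  ultimately show ?thesis by linarith
qed

lemma seg2_T:
  assumes T: "(c, V) \<in> Tset k ns" and k: "k > 0" and npos: "\<forall>n\<in>set ns. n > 0" and t: "t \<in> {0..1}"
  shows "(dl, WW ns V t) \<in> Tset k ns"
proof (rule Tset_I)
  note D = Tset_D[OF T]
  show "\<forall>l. 0 \<le> dl l" by (simp add: dl_def)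
  show "\<forall>l. k \<le> l \<longrightarrow> dl l = 0" using k by (simp add: dl_def)
  show "(\<Sum>l<k. dl l) = 1" using dl_sum[OF k] .
  show "\<forall>l j r. \<not> (l < k \<and> j < length ns \<and> r < ns!j) \<longrightarrow> WW ns V t l j r = 0"
  proof (intro allI impI)
    fix l j r assume out: "\<not> (l < k \<and> j < length ns \<and> r < ns!j)"
    show "WW ns V t l j r = 0"
    proof (cases "l = 0 \<and> j < length ns")
      case True
      then have r: "ns!j \<le> r" using out k by auto
      have "ns!j > 0" using npos True by simp
      then have "e0 r = 0" using r unfolding e0_def by auto
      moreover have "V 0 j r = 0" using D(4) r by auto
      ultimately show ?thesis unfolding WW_def ww_def using True by simp
    next
      case False
      then show ?thesis unfolding WW_def using D(4) out by auto
    qed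
  qed
  show "\<forall>l j. l < k \<and> j < length ns \<longrightarrow> (\<Sum>r<ns!j. (cmod (WW ns V t l j r))\<^sup>2) = 1"
  proof (intro allI impI)
    fix l j assume lj: "l < k \<and> j < length ns"
    show "(\<Sum>r<ns!j. (cmod (WW ns V t l j r))\<^sup>2) = 1"
    proof (cases "l = 0")
      case True
      define S where "S = (\<Sum>r<ns!j. (cmod (ww V j t r))\<^sup>2)"
      have Sp: "S > 0" unfolding S_def using ww_pos[OF T k t] lj npos by auto
      have n2: "(nrm ns V j t)\<^sup>2 = S" unfolding nrm_def S_def[symmetric] using Sp by simp
      have "(\<Sum>r<ns!j. (cmod (WW ns V t l j r))\<^sup>2) = (\<Sum>r<ns!j. (cmod (ww V j t r))\<^sup>2 / (nrm ns V j t)\<^sup>2)"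
        unfolding WW_def using True lj by (intro sum.cong refl) (simp add: norm_divide power_divide)
      also have "\<dots> = S / S" unfolding n2 S_def by (rule sum_divide_distrib[symmetric])
      finally show ?thesis using Sp by simp
    next
      case False
      then show ?thesis unfolding WW_def using D(5) lj by simp
    qed
  qed
qed

lemma seg2_0:
  assumes T: "(c, V) \<in> Tset k ns" and k: "k > 0"
  shows "WW ns V 0 = V"
proof (intro ext)
  fix l j r
  show "WW ns V 0 l j r = V l j r"
  proof (cases "l = 0 \<and> j < length ns")
    case True
    have "nrm ns V j 0 = 1" unfolding nrm_def ww_def using Tset_D(5)[OF T] True k by simp
    then show ?thesis unfolding WW_def ww_def using True by simp
  next
    case False
    then show ?thesis unfolding WW_def by (simp only: if_False simp_thms)
  qed
qed

definition Pstar :: "nat list \<Rightarrow> cmat" where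
  "Pstar ns = kron ns (map (\<lambda>j. rho0 (ns!j) e0) [0..<length ns])"

lemma rho0_phase:
  assumes "cmod u = 1" shows "rho0 n (\<lambda>r. u * v r) = rho0 n v"
proof -
  have "u * cnj u = 1" using assms complex_norm_square[of u] by simp
  then have "u * v a * cnj (u * v b) = v a * cnj (v b)" for a b
  proof -
    have "u * v a * cnj (u * v b) = (u * cnj u) * (v a * cnj (v b))" by (simp add: mult_ac)
    then show ?thesis using \<open>u * cnj u = 1\<close> by simp
  qed
  then show ?thesis unfolding rho0_def by (intro ext) simp
qed

lemma Phi_dl:
  assumes k: "k > 0"
  shows "Phi k ns (dl, W) = kron ns (map (\<lambda>j. rho0 (ns!j) (W 0 j)) [0..<length ns])"
proof (intro ext)
  fix a b
  have "Phi k ns (dl, W) a b = (\<Sum>l\<in>{0}. complex_of_real (dl l) * kron ns (map (\<lambda>j. rho0 (ns!j) (W l j)) [0..<length ns]) a b)"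
    unfolding Phi_def fst_conv snd_conv using k by (intro sum.mono_neutral_right) (auto simp: dl_def)
  then show "Phi k ns (dl, W) a b = kron ns (map (\<lambda>j. rho0 (ns!j) (W 0 j)) [0..<length ns]) a b"
    by (simp add: dl_def)
qed

lemma seg2_1:
  assumes T: "(c, V) \<in> Tset k ns" and k: "k > 0" and npos: "\<forall>n\<in>set ns. n > 0"
  shows "Phi k ns (dl, WW ns V 1) = Pstar ns"
proof -
  have "rho0 (ns!j) (WW ns V 1 0 j) = rho0 (ns!j) e0" if j: "j < length ns" for j
  proof -
    have n0: "ns!j > 0" using npos j by simp
    have "(\<Sum>r<ns!j. (cmod (ww V j 1 r))\<^sup>2) = (\<Sum>r\<in>{0}. (cmod (ww V j 1 r))\<^sup>2)"
      using n0 by (intro sum.mono_neutral_right) (auto simp: ww_def e0_def)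
    also have "\<dots> = 1" by (simp add: ww_def e0_def cmod_phs)
    finally have "nrm ns V j 1 = 1" unfolding nrm_def by simp
    then have "WW ns V 1 0 j = (\<lambda>r. phs (V 0 j 0) * e0 r)" unfolding WW_def ww_def using j by (intro ext) simp
    then show ?thesis using rho0_phase[OF cmod_phs] by simp
  qed
  then have mq: "map (\<lambda>j. rho0 (ns!j) (WW ns V 1 0 j)) [0..<length ns] = map (\<lambda>j. rho0 (ns!j) e0) [0..<length ns]"
    by (intro map_cong) auto
  show ?thesis unfolding Phi_dl[OF k] Pstar_def mq by (rule refl)
qed




lemma cont_seg1:
  "continuous_on S (\<lambda>t::real. ((\<lambda>l. (1 - t) * c l + t * dl l), V))"
proof (rule continuous_on_Pair)
  show "continuous_on S (\<lambda>t::real. \<lambda>l. (1 - t) * c l + t * dl l)"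
    by (rule continuous_on_coordinatewise_then_product) (intro continuous_intros)
qed (rule continuous_on_const)

lemma cont_seg2:
  assumes T: "(c, V) \<in> Tset k ns" and k: "k > 0" and npos: "\<forall>n\<in>set ns. n > 0"
  shows "continuous_on {0..1} (\<lambda>t. (dl, WW ns V t))"
proof (rule continuous_on_Pair[OF continuous_on_const])
  show "continuous_on {0..1} (WW ns V)"
  proof (rule continuous_on_coordinatewise_then_product, rule continuous_on_coordinatewise_then_product,
      rule continuous_on_coordinatewise_then_product)
    fix l j r
    show "continuous_on {0..1} (\<lambda>t. WW ns V t l j r)"
    proof (cases "l = 0 \<and> j < length ns")
      case True
      have ww: "continuous_on {0..1} (\<lambda>t. ww V j t r')" for r'
        unfolding ww_def by (intro continuous_intros)
      have nr: "continuous_on {0..1} (\<lambda>t. nrm ns V j t)"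
        unfolding nrm_def by (intro continuous_intros ww)
      have nz: "complex_of_real (nrm ns V j t) \<noteq> 0" if "t \<in> {0..1}" for t
      proof -
        have "ns!j > 0" using True npos by simp
        then have "0 < (\<Sum>r<ns!j. (cmod (ww V j t r))\<^sup>2)" using ww_pos[OF T k that, of j] True by blast
        then show ?thesis unfolding nrm_def by simp
      qed
      have "continuous_on {0..1} (\<lambda>t. ww V j t r / complex_of_real (nrm ns V j t))"
        using nz by (intro continuous_on_divide ww continuous_on_of_real nr) auto
      then show ?thesis unfolding WW_def using True by simp
    next
      case False
      then show ?thesis unfolding WW_def by (simp only: if_False simp_thms continuous_on_const)
    qed
  qed
qed

lemma connected_Sigma_pure:
  assumes k: "k > 0" and npos: "\<forall>n\<in>set ns. n > 0"
  shows "connected (Sigma_pure k ns)"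
proof -
  have SP: "Sigma_pure k ns = Phi k ns ` Tset k ns" using Phi_sub Phi_sup[OF k] by blast
  define C where "C z = Phi k ns ` ((\<lambda>t. ((\<lambda>l. (1 - t) * fst z l + t * dl l), snd z)) ` {0..1}) \<union>
      Phi k ns ` ((\<lambda>t. (dl, WW ns (snd z) t)) ` {0..1})" for z
  have props: "connected (C z) \<and> C z \<subseteq> Phi k ns ` Tset k ns \<and> Phi k ns z \<in> C z \<and> Pstar ns \<in> C z"
    if z: "z \<in> Tset k ns" for z
  proof -
    obtain c V where zcV: "z = (c, V)" by (cases z)
    have T: "(c, V) \<in> Tset k ns" using z zcV by simp
    define A1 where "A1 = (\<lambda>t. ((\<lambda>l. (1 - t) * c l + t * dl l), V)) ` {0..1::real}"
    define A2 where "A2 = (\<lambda>t. (dl, WW ns V t)) ` {0..1::real}"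
    have CA: "C z = Phi k ns ` A1 \<union> Phi k ns ` A2" unfolding C_def A1_def A2_def zcV by simp
    have c1: "connected A1" unfolding A1_def by (intro connected_continuous_image cont_seg1 connected_Icc)
    have c2: "connected A2" unfolding A2_def by (intro connected_continuous_image cont_seg2[OF T k npos] connected_Icc)
    have s1: "A1 \<subseteq> Tset k ns" unfolding A1_def using seg1_T[OF T k] by auto
    have s2: "A2 \<subseteq> Tset k ns" unfolding A2_def using seg2_T[OF T k npos] by auto
    have e1: "(\<lambda>l. (1 - 1) * c l + 1 * dl l) = dl" by simp
    have p1: "(dl, V) \<in> A1" unfolding A1_def by (rule image_eqI[of _ _ 1]) (simp_all add: e1)
    have p2: "(dl, V) \<in> A2" unfolding A2_def by (rule image_eqI[of _ _ 0]) (simp_all add: seg2_0[OF T k])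
    have e0: "(\<lambda>l. (1 - 0) * c l + 0 * dl l) = c" by simp
    have p0: "(c, V) \<in> A1" unfolding A1_def by (rule image_eqI[of _ _ 0]) (simp_all add: e0)
    have p3: "(dl, WW ns V 1) \<in> A2" unfolding A2_def by (rule image_eqI[of _ _ 1]) simp_all
    have "connected (Phi k ns ` A1 \<union> Phi k ns ` A2)"
    proof (rule connected_Un)
      show "connected (Phi k ns ` A1)" by (intro connected_continuous_image cont_Phi c1)
      show "connected (Phi k ns ` A2)" by (intro connected_continuous_image cont_Phi c2)
      show "Phi k ns ` A1 \<inter> Phi k ns ` A2 \<noteq> {}" using p1 p2 by blast
    qed
    moreover have "Phi k ns ` A1 \<union> Phi k ns ` A2 \<subseteq> Phi k ns ` Tset k ns" using s1 s2 by blast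
    moreover have "Phi k ns z \<in> Phi k ns ` A1 \<union> Phi k ns ` A2" using p0 zcV by blast
    moreover have "Pstar ns \<in> Phi k ns ` A1 \<union> Phi k ns ` A2"
      using p3 seg2_1[OF T k npos] by (metis UnI2 image_eqI)
    ultimately show ?thesis unfolding CA by blast
  qed
  have eq: "Phi k ns ` Tset k ns = \<Union> (C ` Tset k ns)"
  proof
    show "Phi k ns ` Tset k ns \<subseteq> \<Union> (C ` Tset k ns)" using props by blast
    show "\<Union> (C ` Tset k ns) \<subseteq> Phi k ns ` Tset k ns" using props by blast
  qed
  have "connected (\<Union> (C ` Tset k ns))"
  proof (rule connected_Union)
    show "connected s" if "s \<in> C ` Tset k ns" for s using that props by blast
    show "\<Inter> (C ` Tset k ns) \<noteq> {}" using props by blast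
  qed
  then show ?thesis unfolding SP eq .
qed


theorem theorem3:
  fixes ns :: "nat list" and k :: nat
  assumes "length ns \<ge> 1" and "\<forall>n\<in>set ns. n > 0" and "k > 0"
  shows "connected (Sigma_pure k ns) \<and> compact (Sigma_pure k ns)
           \<and> Sigma_pure k ns \<subseteq> Sigma_sep ns
           \<and> (Sigma_pure k ns \<noteq> Sigma_sep ns \<longrightarrow>
                \<not> Sigma_sep ns \<subseteq> closure (Sigma_pure k ns)
                \<and> openin (top_of_set (Sigma_sep ns)) (Sigma_sep ns - Sigma_pure k ns))
           \<and> (real k < (\<Prod>n\<leftarrow>ns. real n ^ 2) /
                   (1 - 2 * real (length ns) + (\<Sum>n\<leftarrow>ns. 2 * real n)) \<longrightarrow>
         hcoord (prod_list ns) ` Sigma_pure k ns \<in>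
           null_sets (completion (PiM {..<prod_list ns * prod_list ns - 1} (\<lambda>_. lborel))))"
proof -
  have conn: "connected (Sigma_pure k ns)" using connected_Sigma_pure assms(2,3) by blast
  have comp: "compact (Sigma_pure k ns)" using compact_Sigma_pure assms(3) by blast
  have sub: "Sigma_pure k ns \<subseteq> Sigma_sep ns" unfolding Sigma_pure_def by blast
  have cl: "closed (Sigma_pure k ns)" using comp by (rule compact_imp_closed)
  have a2: "Sigma_pure k ns \<noteq> Sigma_sep ns \<longrightarrow>
                \<not> Sigma_sep ns \<subseteq> closure (Sigma_pure k ns)
                \<and> openin (top_of_set (Sigma_sep ns)) (Sigma_sep ns - Sigma_pure k ns)"
  proof
    assume ne: "Sigma_pure k ns \<noteq> Sigma_sep ns"
    have "closure (Sigma_pure k ns) = Sigma_pure k ns" using cl by (rule closure_closed)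
    then have 1: "\<not> Sigma_sep ns \<subseteq> closure (Sigma_pure k ns)" using ne sub by blast
    have "open (- Sigma_pure k ns)" using cl by (simp add: open_Compl)
    then have "openin (top_of_set (Sigma_sep ns)) (Sigma_sep ns \<inter> - Sigma_pure k ns)"
      by (rule openin_open_Int)
    moreover have "Sigma_sep ns \<inter> - Sigma_pure k ns = Sigma_sep ns - Sigma_pure k ns" by blast
    ultimately show "\<not> Sigma_sep ns \<subseteq> closure (Sigma_pure k ns)
                \<and> openin (top_of_set (Sigma_sep ns)) (Sigma_sep ns - Sigma_pure k ns)" using 1 by simp
  qed
  have b: "real k < (\<Prod>n\<leftarrow>ns. real n ^ 2) /
                   (1 - 2 * real (length ns) + (\<Sum>n\<leftarrow>ns. 2 * real n)) \<longrightarrow>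
         hcoord (prod_list ns) ` Sigma_pure k ns \<in>
           null_sets (completion (PiM {..<prod_list ns * prod_list ns - 1} (\<lambda>_. lborel)))"
    using partB[OF assms] by blast
  show ?thesis using conn comp sub a2 b by blast
qed

end
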